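(* Fix $b\in\mathbb{Z}^{V_+}_{\ge 0}$. For every $\bar x\in\mathcal{X}$ define $$\mathrm{SRI}(\bar x)=\Big\{y\in[\mathbf 0,b]^N:\ y^\xi(S)\ge k_\xi(S)+\bar x(E(S))-|S|\ \ \forall\,\emptyset\ne S\subseteq V_+,\ \forall \xi\in[N]\Big\}.$$ Then $\mathrm{SRI}(\bar x)=\operatorname{conv}\big(\Pi(\bar x)\cap[\mathbf 0,b]^N\big)$ for every $\bar x\in\mathcal{X}\cap\mathbb{Z}^E$.
   Context: $G=(V,E)$ is a complete undirected graph with $V=\{0\}\cup V_+$ ($0$ is the depot, $V_+$ the customers); $D=(V,A)$ replaces each edge by two opposite arcs. $C\in\mathbb{Q}_{>0}$ is the capacity. Scenarios $\xi\in[N]$ have demand vectors $d^\xi\in\mathbb{Q}^{V_+}_{\ge0}$ and probabilities $p_\xi\ge0$, $\sum_\xi p_\xi=1$; assume $d^\xi(v)\le C$ for all $\xi,v$. $f(S)=\sum_{i\in S}f(i)$; $k_\xi(S)=\lceil d^\xi(S)/C\rceil$; $\bar d=\sum_\xi p_\xi d^\xi$. For $S\subseteq V$, $\delta(S)$ is the set of edges with exactly one endpoint in $S$ and $E(S)$ the set of edges with both endpoints in $S$. $\mathcal{X}$ is one of the polytopes $\mathcal{X}_{\mathrm{sub}}=\{x\in[0,2]^E: x(\delta(v))=2\ \forall v\in V_+,\ x(E(S))\le|S|-1\ \forall\emptyset\ne S\subseteq V_+\}$ or $\mathcal{X}_{\mathrm{cvrp}}=\mathcal{X}_{\mathrm{sub}}\cap\{x: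 x(\delta(0))=2k,\ x(E(S))\le |S|-\lceil \bar d(S)/C\rceil\ \forall \emptyset\ne S\subseteq V_+\}$ for a given positive integer $k$. A route $R=(v_1,\dots,v_\ell)$ is the cycle $0,v_1,\dots,v_\ell,0$ through distinct customers, $V_+(R)=\{v_1,\dots,v_\ell\}$, $v_0=v_{\ell+1}=0$. Each $x\in\mathcal{X}\cap\mathbb{Z}^E$ is a routing plan; $\mathcal{R}(x)$ is the collection of routes it encodes (a value $2$ on edge $\{0,v\}$ encodes the route $(v)$), whose customer sets partition $V_+$. Vectors $y\in\mathbb{R}^{[N]\times V_+}$ have entries $y^\xi_v$, $y^\xi$ is the scenario-$\xi$ restriction. For a route $R=(v_1,\dots,v_\ell)$ and $\xi$, $\mathcal{Y}^\xi(R)$ is the set of $y^\xi\in\mathbb{Z}^{V_+}_{\ge0}$ for which there exist $f\in\mathbb{R}^A_{\ge0}$, $g\in\mathbb{R}^{V_+}_{\ge0}$ with $f_{(v_{i-1},v_i)}+d^\xi(v_i)=f_{(v_i,v_{i+1})}+g_{v_i}$ ($i\in[\ell]$), $f_{(v_{i-1},v_i)}\le C$ ($i\in[\ell+1]$), $g_{v_i}\le C y^\xi_{v_i}$ ($i\in[\ell]$). $\Pi(R)=\mathcal{Y}^1(R)\times\cdots\times\mathcal{Y}^N(R)$, and $\Pi(x)=\bigcap_{R\in\mathcal{R}(x)}\Pi(R)$ for $x\in\mathcal{X}\cap\mathbb{Z}^E$. $[\mathbf 0,b]^N=\{y\in\mathbb{R}^{[N]\times V_+}:0\le y^\xi_v\le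 b_v\ \forall\xi,v\}$. *)

theory Defs
  imports "HOL-Analysis.Analysis"
begin

text \<open>Customers V+ are the elements of a finite type 'v; the vertex set
V = {0} \<union> V+ is the type 'v option, with None the depot 0 and Some v the customer v.
Scenarios [N] are the elements of a finite type 's.  Edges of the complete graph G
are the two-element sets of vertices; arcs of D are ordered pairs of distinct vertices.
An edge vector x in R^E is a function x :: 'v option set \<Rightarrow> real, of which only the
values on edges are ever used.  Vectors y in R^([N] x V+) are elements of
real^'v^'s, with y $ xi $ v = y^xi_v.\<close>

definition edges :: "'v option set set" where
  "edges = {e. \<exists>u w. u \<noteq> w \<and> e = {u, w}}"

definition delta_cust :: "'v \<Rightarrow> 'v option set set" where
  "delta_cust v = {e \<in> edges. Some v \<in> e}"

definition delta_depot :: "'v option set set" where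
  "delta_depot = {e \<in> edges. None \<in> e}"

definition inner_edges :: "'v set \<Rightarrow> 'v option set set" where
  "inner_edges S = {e \<in> edges. e \<subseteq> Some ` S}"

definition X_sub :: "('v::finite option set \<Rightarrow> real) set" where
  "X_sub = {x. (\<forall>e\<in>edges. 0 \<le> x e \<and> x e \<le> 2)
             \<and> (\<forall>v. sum x (delta_cust v) = 2)
             \<and> (\<forall>S. S \<noteq> {} \<longrightarrow> sum x (inner_edges S) \<le> real (card S) - 1)}"

definition dbar :: "('s::finite \<Rightarrow> real) \<Rightarrow> ('s \<Rightarrow> 'v \<Rightarrow> real) \<Rightarrow> 'v \<Rightarrow> real" where
  "dbar p d v = (\<Sum>xi\<in>UNIV. p xi * d xi v)"

definition X_cvrp :: "real \<Rightarrow> ('s::finite \<Rightarrow> real) \<Rightarrow> ('s \<Rightarrow> 'v::finite \<Rightarrow> real) \<Rightarrow> nat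
    \<Rightarrow> ('v option set \<Rightarrow> real) set" where
  "X_cvrp C p d k = X_sub \<inter> {x. sum x delta_depot = 2 * real k
      \<and> (\<forall>S. S \<noteq> {} \<longrightarrow>
           sum x (inner_edges S) \<le> real (card S) - real_of_int \<lceil>sum (dbar p d) S / C\<rceil>)}"

definition kxi :: "real \<Rightarrow> ('s \<Rightarrow> 'v \<Rightarrow> real) \<Rightarrow> 's \<Rightarrow> 'v set \<Rightarrow> int" where
  "kxi C d xi S = \<lceil>sum (d xi) S / C\<rceil>"

text \<open>Routes: a route R = (v_1,...,v_l) is a nonempty list of distinct customers;
route_vtx R i is v_i, with v_0 = v_(l+1) = depot.\<close>
definition is_route :: "'v list \<Rightarrow> bool" where
  "is_route R \<longleftrightarrow> R \<noteq> [] \<and> distinct R"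

definition route_vtx :: "'v list \<Rightarrow> nat \<Rightarrow> 'v option" where
  "route_vtx R i = (if i = 0 \<or> i = length R + 1 then None else Some (R ! (i - 1)))"

text \<open>Edge incidence vector of the cycle 0, v_1, ..., v_l, 0 (value 2 on {0,v} for R = (v)).\<close>
definition route_vec :: "'v list \<Rightarrow> 'v option set \<Rightarrow> real" where
  "route_vec R e = real (card {i \<in> {1..length R + 1}. {route_vtx R (i - 1), route_vtx R i} = e})"

text \<open>R(x): the routes encoded by an integral routing plan x, i.e. the routes R whose
cycle coincides with x on all edges incident to the customers of R (both orientations
of each cycle are included).\<close>
definition routes_of :: "('v option set \<Rightarrow> real) \<Rightarrow> 'v list set" where
  "routes_of x = {R. is_route R \<and>
      (\<forall>e\<in>edges. e \<inter> Some ` set R \<noteq> {} \<longrightarrow> x e = route_vec R e)}"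

definition Yxi :: "real \<Rightarrow> ('s \<Rightarrow> 'v \<Rightarrow> real) \<Rightarrow> 's \<Rightarrow> 'v list \<Rightarrow> (real^'v) set" where
  "Yxi C d xi R = {z. (\<forall>v. z $ v \<in> \<int> \<and> 0 \<le> z $ v) \<and>
     (\<exists>(f :: 'v option \<times> 'v option \<Rightarrow> real) (g :: 'v \<Rightarrow> real).
        (\<forall>a. 0 \<le> f a) \<and> (\<forall>v. 0 \<le> g v) \<and>
        (\<forall>i\<in>{1..length R}.
           f (route_vtx R (i - 1), route_vtx R i) + d xi (R ! (i - 1))
             = f (route_vtx R i, route_vtx R (i + 1)) + g (R ! (i - 1))) \<and>
        (\<forall>i\<in>{1..length R + 1}. f (route_vtx R (i - 1), route_vtx R i) \<le> C) \<and>
        (\<forall>i\<in>{1..length R}. g (R ! (i - 1)) \<le> C * z $ (R ! (i - 1))))}"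

definition Pi_route :: "real \<Rightarrow> ('s \<Rightarrow> 'v \<Rightarrow> real) \<Rightarrow> 'v list \<Rightarrow> (real^'v^'s) set" where
  "Pi_route C d R = {y. \<forall>xi. y $ xi \<in> Yxi C d xi R}"

definition Pi_plan :: "real \<Rightarrow> ('s \<Rightarrow> 'v \<Rightarrow> real) \<Rightarrow> ('v option set \<Rightarrow> real) \<Rightarrow> (real^'v^'s) set" where
  "Pi_plan C d x = (\<Inter>R\<in>routes_of x. Pi_route C d R)"

definition box0 :: "('v \<Rightarrow> int) \<Rightarrow> (real^'v^'s) set" where
  "box0 b = {y. \<forall>xi v. 0 \<le> y $ xi $ v \<and> y $ xi $ v \<le> real_of_int (b v)}"

definition SRI :: "real \<Rightarrow> ('s \<Rightarrow> 'v \<Rightarrow> real) \<Rightarrow> ('v \<Rightarrow> int) \<Rightarrow> ('v option set \<Rightarrow> real)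
    \<Rightarrow> (real^'v^'s) set" where
  "SRI C d b x = {y \<in> box0 b. \<forall>S xi. S \<noteq> {} \<longrightarrow>
      sum (\<lambda>v. y $ xi $ v) S \<ge> real_of_int (kxi C d xi S) + sum x (inner_edges S) - real (card S)}"

end

theory Submission
  imports Defs "HOL-Analysis.Analysis"
begin



lemma finite_edges: "finite (edges :: 'v::finite option set set)"
  by (rule finite_subset[of _ UNIV]) auto

lemma doubleton_in_edges[simp]: "{a, b} \<in> edges \<longleftrightarrow> a \<noteq> b"
  unfolding edges_def by (auto simp: doubleton_eq_iff)

lemma edgesE: assumes "e \<in> edges" obtains u w where "u \<noteq> w" "e = {u, w}"
  using assms unfolding edges_def by auto

lemma delta_custE: assumes "e \<in> delta_cust v" obtains w where "w \<noteq> Some v" "e = {Some v, w}"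
proof -
  have e: "e \<in> edges" "Some v \<in> e" using assms unfolding delta_cust_def by auto
  from e(1) obtain a c where ac: "a \<noteq> c" "e = {a, c}" by (rule edgesE)
  show ?thesis
  proof (cases "a = Some v")
    case True then show ?thesis using that[of c] ac by simp
  next
    case False then have "c = Some v" using ac e by simp
    then show ?thesis using that[of a] ac by (simp add: insert_commute)
  qed
qed

lemma in_delta_cust[simp]: "{Some v, w} \<in> delta_cust v \<longleftrightarrow> w \<noteq> Some v"
  by (auto simp: delta_cust_def)

lemma finite_delta_cust: "finite (delta_cust (v::'v::finite))"
  unfolding delta_cust_def by (rule finite_subset[OF _ finite_edges]) auto

lemma delta_cust_sub: "delta_cust v \<subseteq> edges" unfolding delta_cust_def by auto

locale plan =
  fixes x :: "'v::finite option set \<Rightarrow> real"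
  assumes xs: "x \<in> X_sub" and xint: "\<forall>e\<in>edges. x e \<in> \<int>"
begin

lemma x_nonneg: "e \<in> edges \<Longrightarrow> 0 \<le> x e" using xs unfolding X_sub_def by auto
lemma x_le2: "e \<in> edges \<Longrightarrow> x e \<le> 2" using xs unfolding X_sub_def by auto
lemma deg: "sum x (delta_cust v) = 2" using xs unfolding X_sub_def by auto
lemma subtour: "S \<noteq> {} \<Longrightarrow> sum x (inner_edges S) \<le> real (card S) - 1"
  using xs unfolding X_sub_def by auto

lemma x_ge1: assumes "e \<in> edges" "x e \<noteq> 0" shows "1 \<le> x e"
proof -
  obtain n where n: "x e = of_int n" using xint assms(1) Ints_cases by metis
  with x_nonneg[OF assms(1)] assms(2) have "n \<ge> 1" by auto
  with n show ?thesis by simp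
qed

lemma x_zero: "e \<in> edges \<Longrightarrow> x e < 1 \<Longrightarrow> x e = 0"
  using x_ge1 by force

lemma x_cust_le1: assumes "u \<noteq> w" shows "x {Some u, Some w} \<le> 1"
proof -
  have "inner_edges {u, w} = {{Some u, Some w}}"
  proof (rule set_eqI, rule iffI)
    fix e assume "e \<in> inner_edges {u, w}"
    then have e: "e \<in> edges" "e \<subseteq> {Some u, Some w}" unfolding inner_edges_def by auto
    from e(1) obtain a c where "a \<noteq> c" "e = {a, c}" by (rule edgesE)
    with e(2) show "e \<in> {{Some u, Some w}}" by auto
  next
    fix e assume "e \<in> {{Some u, Some w}}"
    then show "e \<in> inner_edges {u, w}" unfolding inner_edges_def using assms by auto
  qed
  then show ?thesis using subtour[of "{u,w}"] assms by simp
qed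

lemma in_dc_edges: "e \<in> delta_cust u \<Longrightarrow> e \<in> edges"
  unfolding delta_cust_def by simp

lemma x_nonneg_dc: "e \<in> delta_cust u \<Longrightarrow> 0 \<le> x e"
  by (rule x_nonneg, rule in_dc_edges)

lemma deg_two:
  assumes "e1 \<in> delta_cust u" "e2 \<in> delta_cust u" "e1 \<noteq> e2" "1 \<le> x e1" "1 \<le> x e2"
    "e \<in> delta_cust u"
  shows "x e = (if e = e1 \<or> e = e2 then 1 else 0)"
proof -
  let ?D = "delta_cust u"
  let ?R = "?D - {e1, e2}"
  have fin: "finite ?D" by (rule finite_delta_cust)
  have "sum x ?D = sum x {e1, e2} + sum x ?R"
    using sum.subset_diff[of "{e1,e2}" ?D x] fin assms(1,2) by simp
  also have "sum x {e1, e2} = x e1 + x e2" using assms(3) by simp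
  finally have s: "sum x ?D = x e1 + x e2 + sum x ?R" .
  have nn: "\<And>e. e \<in> ?R \<Longrightarrow> 0 \<le> x e" by (meson DiffD1 x_nonneg_dc)
  have r: "sum x ?R \<ge> 0" by (rule sum_nonneg) (rule nn)
  have d: "sum x ?D = 2" by (rule deg)
  have x1: "x e1 = 1" using s d r assms(4,5) by linarith
  have x2: "x e2 = 1" using s d r assms(4,5) by linarith
  have r0: "sum x ?R = 0" using s d r assms(4,5) by linarith
  have "\<forall>e\<in>?R. x e = 0"
    using sum_nonneg_eq_0_iff[of ?R x] fin nn r0 by simp
  then show ?thesis using assms(6) x1 x2 by auto
qed

lemma deg_one:
  assumes "e1 \<in> delta_cust u" "2 \<le> x e1" "e \<in> delta_cust u"
  shows "x e = (if e = e1 then 2 else 0)"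
proof -
  let ?D = "delta_cust u"
  let ?R = "?D - {e1}"
  have fin: "finite ?D" by (rule finite_delta_cust)
  have s: "sum x ?D = x e1 + sum x ?R"
    by (rule sum.remove) (use fin assms(1) in auto)
  have nn: "\<And>e. e \<in> ?R \<Longrightarrow> 0 \<le> x e" by (meson DiffD1 x_nonneg_dc)
  have r: "sum x ?R \<ge> 0" by (rule sum_nonneg) (rule nn)
  have d: "sum x ?D = 2" by (rule deg)
  have x1: "x e1 = 2" using s d r assms(2) by linarith
  have r0: "sum x ?R = 0" using s d r assms(2) by linarith
  have "\<forall>e\<in>?R. x e = 0"
    using sum_nonneg_eq_0_iff[of ?R x] fin nn r0 by simp
  then show ?thesis using assms(3) x1 by auto
qed

lemma exists_other:
  assumes "e1 \<in> delta_cust u" "x e1 \<le> 1"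
  shows "\<exists>e2\<in>delta_cust u. e2 \<noteq> e1 \<and> 1 \<le> x e2"
proof (rule ccontr)
  let ?D = "delta_cust u"
  let ?R = "?D - {e1}"
  have fin: "finite ?D" by (rule finite_delta_cust)
  assume a: "\<not> ?thesis"
  have "\<And>e. e \<in> ?R \<Longrightarrow> x e = 0"
  proof -
    fix e assume e: "e \<in> ?R"
    then have "x e < 1" using a by auto
    moreover have "e \<in> edges" using e by (meson DiffD1 in_dc_edges)
    ultimately show "x e = 0" using x_zero by simp
  qed
  then have "sum x ?R = 0" by simp
  moreover have "sum x ?D = x e1 + sum x ?R"
    by (rule sum.remove) (use fin assms(1) in auto)
  ultimately show False using deg[of u] assms(2) by simp
qed

end



lemma rv_0[simp]: "route_vtx R 0 = None" by (simp add: route_vtx_def)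
lemma rv_end[simp]: "route_vtx R (Suc (length R)) = None" by (simp add: route_vtx_def)
lemma rv_Suc: "k < length R \<Longrightarrow> route_vtx R (Suc k) = Some (R!k)" by (simp add: route_vtx_def)

lemma rv_cases: "m \<le> Suc (length R) \<Longrightarrow>
   (m = 0 \<and> route_vtx R m = None) \<or> (m = Suc (length R) \<and> route_vtx R m = None)
   \<or> (0 < m \<and> m \<le> length R \<and> route_vtx R m = Some (R ! (m - 1)))"
  by (auto simp: route_vtx_def)

lemma rv_eq_iff:
  assumes "distinct R" "m \<le> Suc (length R)" "m' \<le> Suc (length R)"
  shows "route_vtx R m = route_vtx R m' \<longleftrightarrow>
     (m = m' \<or> (m \<in> {0, Suc (length R)} \<and> m' \<in> {0, Suc (length R)}))"
proof -
  have "R ! (m - 1) = R ! (m' - 1) \<longleftrightarrow> m - 1 = m' - 1" if "0 < m" "m \<le> length R" "0 < m'" "m' \<le> length R"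
    using nth_eq_iff_index_eq[OF assms(1)] that by simp
  then show ?thesis using rv_cases[OF assms(2)] rv_cases[OF assms(3)] by auto
qed

lemma rv_Some_iff:
  assumes "distinct R" "i < length R" "m \<le> Suc (length R)"
  shows "route_vtx R m = Some (R ! i) \<longleftrightarrow> m = Suc i"
  using rv_eq_iff[OF assms(1) assms(3), of "Suc i"] assms rv_Suc[of i R] by auto

lemma rv_Some_in: "route_vtx R m = Some w \<Longrightarrow> m \<le> Suc (length R) \<Longrightarrow> w \<in> set R"
  by (auto simp: route_vtx_def split: if_splits)

lemma routes_ofD: "R \<in> routes_of x \<Longrightarrow> e \<in> edges \<Longrightarrow> e \<inter> Some ` set R \<noteq> {} \<Longrightarrow> x e = route_vec R e"
  unfolding routes_of_def by simp

lemma routes_of_route: "R \<in> routes_of x \<Longrightarrow> is_route R"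
  unfolding routes_of_def by simp

lemma route_vec_formula:
  assumes R: "is_route R" and i: "i < length R" and w: "w \<noteq> Some (R ! i)"
  shows "route_vec R {Some (R ! i), w} =
     (if w = route_vtx R i then 1 else 0) + (if w = route_vtx R (Suc (Suc i)) then 1 else 0)"
proof -
  let ?l = "length R"
  have dR: "distinct R" using R unfolding is_route_def by simp
  let ?A = "{j \<in> {1..?l + 1}. {route_vtx R (j - 1), route_vtx R j} = {Some (R ! i), w}}"
  have A: "?A = {j. j = Suc i \<and> w = route_vtx R i} \<union> {j. j = Suc (Suc i) \<and> w = route_vtx R (Suc (Suc i))}"
  proof (rule set_eqI, rule iffI)
    fix j assume "j \<in> ?A"
    then have j: "1 \<le> j" "j \<le> ?l + 1" and eq: "{route_vtx R (j - 1), route_vtx R j} = {Some (R ! i), w}" by auto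
    from eq have "(route_vtx R (j - 1) = Some (R ! i) \<and> route_vtx R j = w) \<or>
                  (route_vtx R (j - 1) = w \<and> route_vtx R j = Some (R ! i))"
      by (auto simp: doubleton_eq_iff)
    then show "j \<in> {j. j = Suc i \<and> w = route_vtx R i} \<union> {j. j = Suc (Suc i) \<and> w = route_vtx R (Suc (Suc i))}"
    proof
      assume a: "route_vtx R (j - 1) = Some (R ! i) \<and> route_vtx R j = w"
      then have "j - 1 = Suc i" using rv_Some_iff[OF dR i, of "j - 1"] j by simp
      then have "j = Suc (Suc i)" by simp
      then show ?thesis using a by simp
    next
      assume a: "route_vtx R (j - 1) = w \<and> route_vtx R j = Some (R ! i)"
      then have "j = Suc i" using rv_Some_iff[OF dR i, of j] j by simp
      then show ?thesis using a by simp
    qed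
  next
    fix j assume "j \<in> {j. j = Suc i \<and> w = route_vtx R i} \<union> {j. j = Suc (Suc i) \<and> w = route_vtx R (Suc (Suc i))}"
    then show "j \<in> ?A" using i rv_Suc[of i R] rv_Suc[of "Suc i" R]
      by (auto simp: insert_commute)
  qed
  have "card ?A = (if w = route_vtx R i then 1 else 0) + (if w = route_vtx R (Suc (Suc i)) then 1 else 0)"
    unfolding A by (cases "w = route_vtx R i"; cases "w = route_vtx R (Suc (Suc i))") auto
  then show ?thesis unfolding route_vec_def by simp
qed

context plan begin

lemma route_x:
  assumes R: "R \<in> routes_of x" and i: "i < length R" and w: "w \<noteq> Some (R ! i)"
  shows "x {Some (R ! i), w} =
     (if w = route_vtx R i then 1 else 0) + (if w = route_vtx R (Suc (Suc i)) then 1 else 0)"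
proof -
  have r: "is_route R" using R by (rule routes_of_route)
  have e: "{Some (R ! i), w} \<in> edges" using w by simp
  have "{Some (R ! i), w} \<inter> Some ` set R \<noteq> {}" using i by auto
  then have "x {Some (R ! i), w} = route_vec R {Some (R ! i), w}"
    using routes_ofD[OF R e] by simp
  then show ?thesis using route_vec_formula[OF r i w] by simp
qed

lemma route_x_pos:
  assumes R: "R \<in> routes_of x" and i: "i < length R" and w: "w \<noteq> Some (R ! i)"
    and nz: "x {Some (R ! i), w} \<noteq> 0"
  shows "w = route_vtx R i \<or> w = route_vtx R (Suc (Suc i))"
  using route_x[OF R i w] nz by (auto split: if_splits)

end



context plan begin

definition pathset :: "'v \<Rightarrow> 'v list set" where
  "pathset v = {L. L \<noteq> [] \<and> distinct L \<and> v \<in> set L \<and>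
      (\<forall>k. Suc k < length L \<longrightarrow> 1 \<le> x {Some (L ! k), Some (L ! Suc k)})}"

lemma x_le1_int: "e \<in> edges \<Longrightarrow> x e < 2 \<Longrightarrow> x e \<le> 1"
proof -
  assume e: "e \<in> edges" and l: "x e < 2"
  obtain n where n: "x e = of_int n" using xint e Ints_cases by metis
  then have "n < 2" using l by simp
  then have "n \<le> 1" by simp
  then show ?thesis using n by simp
qed

lemma pathset_len: "L \<in> pathset v \<Longrightarrow> length L \<le> CARD('v)"
  unfolding pathset_def using distinct_card[of L] card_mono[of UNIV "set L"] by auto

lemma pathset_rev: assumes "L \<in> pathset v" shows "rev L \<in> pathset v"
proof -
  have L: "L \<noteq> []" "distinct L" "v \<in> set L"
     "\<And>k. Suc k < length L \<Longrightarrow> 1 \<le> x {Some (L ! k), Some (L ! Suc k)}"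
    using assms unfolding pathset_def by auto
  have "1 \<le> x {Some (rev L ! k), Some (rev L ! Suc k)}" if k: "Suc k < length L" for k
  proof -
    let ?j = "length L - 2 - k"
    have j: "Suc ?j < length L" using k by simp
    have "rev L ! k = L ! Suc ?j" using k by (simp add: rev_nth Suc_diff_Suc)
    moreover have "rev L ! Suc k = L ! ?j" using k by (simp add: rev_nth)
    ultimately have "{Some (rev L ! k), Some (rev L ! Suc k)} = {Some (L ! ?j), Some (L ! Suc ?j)}"
      by (simp add: insert_commute)
    then show ?thesis using L(4)[OF j] by simp
  qed
  then show ?thesis using L unfolding pathset_def by simp
qed

lemma pathset_ext:
  assumes "L \<in> pathset v" "w \<notin> set L" "1 \<le> x {Some w, Some (L ! 0)}"
  shows "w # L \<in> pathset v"
proof -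
  have L: "L \<noteq> []" "distinct L" "v \<in> set L"
     "\<And>k. Suc k < length L \<Longrightarrow> 1 \<le> x {Some (L ! k), Some (L ! Suc k)}"
    using assms unfolding pathset_def by auto
  have "1 \<le> x {Some ((w # L) ! k), Some ((w # L) ! Suc k)}" if k: "Suc k < length (w # L)" for k
  proof (cases k)
    case 0 then show ?thesis using assms(3) by simp
  next
    case (Suc k') then show ?thesis using L(4)[of k'] k by simp
  qed
  then show ?thesis using L assms(2) unfolding pathset_def by simp
qed

lemma no_cycle:
  assumes dL: "distinct L" and cons: "\<And>k. Suc k < length L \<Longrightarrow> 1 \<le> x {Some (L ! k), Some (L ! Suc k)}"
    and j: "2 \<le> j" "j < length L" and c: "1 \<le> x {Some (L ! 0), Some (L ! j)}"
  shows False
proof -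
  have Lne: "L \<noteq> []" using j by auto
  let ?S = "(\<lambda>k. L ! k) ` {..j}"
  have cS: "card ?S = Suc j"
    using card_image[OF inj_on_nth[OF dL, of "{..j}"]] j by simp
  let ?g = "\<lambda>k. {Some (L ! k), Some (L ! Suc k)}"
  let ?F = "insert {Some (L ! 0), Some (L ! j)} (?g ` {..<j})"
  have ne: "\<And>a b. a < length L \<Longrightarrow> b < length L \<Longrightarrow> L ! a = L ! b \<longleftrightarrow> a = b"
    using nth_eq_iff_index_eq[OF dL] by blast
  have inj: "inj_on ?g {..<j}"
  proof (rule inj_onI)
    fix a b assume a: "a \<in> {..<j}" and b: "b \<in> {..<j}" and eq: "?g a = ?g b"
    then have "(L ! a = L ! b \<and> L ! Suc a = L ! Suc b) \<or> (L ! a = L ! Suc b \<and> L ! Suc a = L ! b)"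
      by (simp add: doubleton_eq_iff)
    then show "a = b"
    proof
      assume "L ! a = L ! b \<and> L ! Suc a = L ! Suc b"
      then show "a = b" using ne[of a b] a b j Lne by simp
    next
      assume h: "L ! a = L ! Suc b \<and> L ! Suc a = L ! b"
      then have "a = Suc b" using ne[of a "Suc b"] a b j Lne by simp
      moreover have "Suc a = b" using h ne[of "Suc a" b] a b j Lne by simp
      ultimately show "a = b" by simp
    qed
  qed
  have notin: "{Some (L ! 0), Some (L ! j)} \<notin> ?g ` {..<j}"
  proof
    assume "{Some (L ! 0), Some (L ! j)} \<in> ?g ` {..<j}"
    then obtain k where k: "k < j" "{Some (L ! 0), Some (L ! j)} = ?g k" by auto
    then have "(L ! 0 = L ! k \<and> L ! j = L ! Suc k) \<or> (L ! 0 = L ! Suc k \<and> L ! j = L ! k)"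
      by (simp add: doubleton_eq_iff)
    then show False
    proof
      assume h: "L ! 0 = L ! k \<and> L ! j = L ! Suc k"
      moreover have "L \<noteq> []" using j by auto
      ultimately have "k = 0" using ne[of 0 k] k j Lne by simp
      moreover have "j = Suc k" using h ne[of j "Suc k"] k j Lne by simp
      ultimately show False using j by simp
    next
      assume h: "L ! 0 = L ! Suc k \<and> L ! j = L ! k"
      moreover have "L \<noteq> []" using j by auto
      ultimately show False using ne[of 0 "Suc k"] k j Lne by simp
    qed
  qed
  have cF: "card ?F = Suc j"
    using card_image[OF inj] notin by (simp add: card_insert_if)
  have Fsub: "?F \<subseteq> inner_edges ?S"
  proof
    fix e assume "e \<in> ?F"
    then consider "e = {Some (L ! 0), Some (L ! j)}" | k where "k < j" "e = ?g k" by auto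
    then show "e \<in> inner_edges ?S"
    proof cases
      case 1
      have "L ! 0 \<noteq> L ! j" using ne[of 0 j] j Lne by simp
      then show ?thesis using 1 j unfolding inner_edges_def by auto
    next
      case 2
      have "L ! k \<noteq> L ! Suc k" using ne[of k "Suc k"] 2 j Lne by simp
      moreover have "L ! k \<in> ?S" "L ! Suc k \<in> ?S" using 2 by auto
      ultimately show ?thesis using 2 unfolding inner_edges_def by auto
    qed
  qed
  have finI: "finite (inner_edges ?S)"
    unfolding inner_edges_def by (rule finite_subset[OF _ finite_edges]) auto
  have xF: "\<And>e. e \<in> ?F \<Longrightarrow> 1 \<le> x e"
  proof -
    fix e assume "e \<in> ?F"
    then consider "e = {Some (L ! 0), Some (L ! j)}" | k where "k < j" "e = ?g k" by auto
    then show "1 \<le> x e"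
    proof cases
      case 1 then show ?thesis using c by simp
    next
      case 2 then show ?thesis using cons[of k] j by simp
    qed
  qed
  have "real (card ?F) \<le> sum x ?F"
    using sum_mono[of ?F "\<lambda>_. (1::real)" x] xF by simp
  also have "\<dots> \<le> sum x (inner_edges ?S)"
  proof (rule sum_mono2[OF finI Fsub])
    fix e assume "e \<in> inner_edges ?S - ?F"
    then have "e \<in> edges" unfolding inner_edges_def by simp
    then show "0 \<le> x e" by (rule x_nonneg)
  qed
  also have "\<dots> \<le> real (card ?S) - 1" by (rule subtour) simp
  finally show False using cF cS by simp
qed

end



lemma dbl_eq: "w \<noteq> s \<Longrightarrow> a \<noteq> s \<Longrightarrow> ({s, w} = {s, a}) \<longleftrightarrow> w = a"
  by (auto simp: doubleton_eq_iff)

context plan begin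

lemma pathsetD:
  assumes "L \<in> pathset v"
  shows "L \<noteq> []" "distinct L" "v \<in> set L"
     "\<And>k. Suc k < length L \<Longrightarrow> 1 \<le> x {Some (L ! k), Some (L ! Suc k)}"
  using assms unfolding pathset_def by auto

lemma end_lemma:
  assumes L: "L \<in> pathset v" and mx: "\<And>L'. L' \<in> pathset v \<Longrightarrow> length L' \<le> length L"
  shows "1 \<le> x {Some (L ! 0), None} \<and> (length L = 1 \<longrightarrow> x {Some (L ! 0), None} = 2)"
proof -
  note Ld = pathsetD[OF L]
  let ?u = "L ! 0"
  have ext: False if "w \<notin> set L" "1 \<le> x {Some w, Some ?u}" for w
    using mx[OF pathset_ext[OF L that]] by simp
  have u_in: "?u \<in> set L" using Ld(1) by simp
  show ?thesis
  proof (cases "length L = 1")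
    case True
    then have Lu: "set L = {?u}" by (cases L) auto
    let ?e0 = "{Some ?u, None}"
    have e0: "?e0 \<in> delta_cust ?u" by simp
    have e0E: "?e0 \<in> edges" by simp
    show ?thesis
    proof (cases "2 \<le> x ?e0")
      case True
      then have "x ?e0 = 2" using x_le2[OF e0E] by simp
      then show ?thesis by simp
    next
      case False
      then have "x ?e0 \<le> 1" using x_le1_int[OF e0E] by simp
      then obtain e2 where e2: "e2 \<in> delta_cust ?u" "e2 \<noteq> ?e0" "1 \<le> x e2"
        using exists_other[OF e0] by blast
      obtain w where w: "w \<noteq> Some ?u" "e2 = {Some ?u, w}" by (rule delta_custE[OF e2(1)])
      have "w \<noteq> None" using w e2(2) by auto
      then obtain w' where w': "w = Some w'" by auto
      have "w' \<notin> set L" using Lu w w' by simp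
      moreover have "1 \<le> x {Some w', Some ?u}" using e2(3) w w' by (simp add: insert_commute)
      ultimately show ?thesis using ext by blast
    qed
  next
    case False
    have "length L \<noteq> 0" using Ld(1) by simp
    then have l2: "2 \<le> length L" using False by linarith
    let ?e1 = "{Some ?u, Some (L ! 1)}"
    have ne01: "?u \<noteq> L ! 1" using nth_eq_iff_index_eq[OF Ld(2), of 0 1] l2 Ld(1) by simp
    have e1: "?e1 \<in> delta_cust ?u" using ne01 by simp
    have x1: "x ?e1 \<le> 1" using x_cust_le1[OF ne01] .
    obtain e2 where e2: "e2 \<in> delta_cust ?u" "e2 \<noteq> ?e1" "1 \<le> x e2"
      using exists_other[OF e1 x1] by blast
    obtain w where w: "w \<noteq> Some ?u" "e2 = {Some ?u, w}" by (rule delta_custE[OF e2(1)])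
    have "1 \<le> x {Some ?u, None}"
    proof (cases w)
      case None then show ?thesis using w e2 by simp
    next
      case (Some w')
      have w'u: "w' \<noteq> ?u" using w Some by simp
      have w'1: "w' \<noteq> L ! 1" using w Some e2(2) by auto
      have xe: "1 \<le> x {Some ?u, Some w'}" using e2(3) w Some by simp
      show ?thesis
      proof (cases "w' \<in> set L")
        case False
        then show ?thesis using ext[of w'] xe by (simp add: insert_commute)
      next
        case True
        then obtain j where j: "j < length L" "L ! j = w'" by (auto simp: in_set_conv_nth)
        have "j \<noteq> 0" proof assume "j = 0" then show False using j w'u by simp qed
        moreover have "j \<noteq> 1" proof assume "j = 1" then show False using j w'1 by simp qed
        ultimately have "2 \<le> j" by simp
        from no_cycle[OF Ld(2) Ld(4) this j(1)] show ?thesis using xe j by simp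
      qed
    qed
    then show ?thesis using False by simp
  qed
qed

lemma cover: "\<exists>R\<in>routes_of x. v \<in> set R"
proof -
  have v1: "[v] \<in> pathset v" unfolding pathset_def by simp
  have bnd: "\<forall>L. L \<in> pathset v \<longrightarrow> length L < Suc (CARD('v))"
    using pathset_len by (simp add: less_Suc_eq_le)
  obtain L where L: "L \<in> pathset v" and mx0: "\<forall>L'. L' \<in> pathset v \<longrightarrow> length L' \<le> length L"
    using ex_has_greatest_nat[of "\<lambda>L. L \<in> pathset v" "[v]" length, OF v1 bnd] by blast
  have mx: "\<And>L'. L' \<in> pathset v \<Longrightarrow> length L' \<le> length L" using mx0 by blast
  have rL: "rev L \<in> pathset v" by (rule pathset_rev[OF L])
  have mxr: "\<And>L'. L' \<in> pathset v \<Longrightarrow> length L' \<le> length (rev L)" using mx by simp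
  note Ld = pathsetD[OF L]
  let ?l = "length L"
  have lpos: "0 < ?l" using Ld(1) by simp
  have E1: "1 \<le> x {Some (L ! 0), None}" "?l = 1 \<longrightarrow> x {Some (L ! 0), None} = 2"
    using end_lemma[OF L mx] by auto
  have "rev L ! 0 = L ! (?l - 1)" using lpos by (simp add: rev_nth)
  then have E2: "1 \<le> x {Some (L ! (?l - 1)), None}"
    using end_lemma[OF rL mxr] by auto
  have isr: "is_route L" unfolding is_route_def using Ld by simp
  have "\<forall>e\<in>edges. e \<inter> Some ` set L \<noteq> {} \<longrightarrow> x e = route_vec L e"
  proof (intro ballI impI)
    fix e assume eE: "e \<in> edges" and int: "e \<inter> Some ` set L \<noteq> {}"
    then obtain i where i: "i < ?l" "Some (L ! i) \<in> e" by (auto simp: in_set_conv_nth)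
    have edc: "e \<in> delta_cust (L ! i)" unfolding delta_cust_def using eE i by simp
    obtain w where w: "w \<noteq> Some (L ! i)" "e = {Some (L ! i), w}" by (rule delta_custE[OF edc])
    have rf: "route_vec L e = (if w = route_vtx L i then 1 else 0) + (if w = route_vtx L (Suc (Suc i)) then 1 else 0)"
      using route_vec_formula[OF isr i(1) w(1)] w(2) by simp
    let ?a = "route_vtx L i" and ?b = "route_vtx L (Suc (Suc i))"
    let ?S = "Some (L ! i)"
    have aS: "?a \<noteq> ?S" using rv_Some_iff[OF Ld(2) i(1), of i] i by simp
    have bS: "?b \<noteq> ?S" using rv_Some_iff[OF Ld(2) i(1), of "Suc (Suc i)"] i by simp
    have e1dc: "{?S, ?a} \<in> delta_cust (L ! i)" using aS by simp
    have e2dc: "{?S, ?b} \<in> delta_cust (L ! i)" using bS by simp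
    have xa: "1 \<le> x {?S, ?a}"
    proof (cases i)
      case 0 then show ?thesis using E1 by simp
    next
      case (Suc k)
      then have "?a = Some (L ! k)" using rv_Suc[of k L] i by simp
      then show ?thesis using Ld(4)[of k] Suc i by (simp add: insert_commute)
    qed
    have xb: "1 \<le> x {?S, ?b}"
    proof (cases "Suc i = ?l")
      case True
      then have "?b = None" by simp
      moreover have "i = ?l - 1" using True by simp
      ultimately show ?thesis using E2 by simp
    next
      case False
      then have "Suc i < ?l" using i by simp
      then have "?b = Some (L ! Suc i)" using rv_Suc[of "Suc i" L] by simp
      then show ?thesis using Ld(4)[of i] \<open>Suc i < ?l\<close> by simp
    qed
    show "x e = route_vec L e"
    proof (cases "?a = ?b")
      case True
      then have "i = 0 \<and> ?l = 1"
        using rv_eq_iff[OF Ld(2), of i "Suc (Suc i)"] i by auto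
      then have a2: "2 \<le> x {?S, ?a}" using E1 by simp
      have "x e = (if e = {?S, ?a} then 2 else 0)" by (rule deg_one[OF e1dc a2 edc])
      moreover have "e = {?S, ?a} \<longleftrightarrow> w = ?a" using dbl_eq[OF w(1) aS] w(2) by simp
      ultimately show ?thesis using rf True by simp
    next
      case False
      have ne: "{?S, ?a} \<noteq> {?S, ?b}" using dbl_eq[OF aS bS] False by simp
      have "x e = (if e = {?S, ?a} \<or> e = {?S, ?b} then 1 else 0)" by (rule deg_two[OF e1dc e2dc ne xa xb edc])
      moreover have "e = {?S, ?a} \<longleftrightarrow> w = ?a" using dbl_eq[OF w(1) aS] w(2) by simp
      moreover have "e = {?S, ?b} \<longleftrightarrow> w = ?b" using dbl_eq[OF w(1) bS] w(2) by simp
      ultimately show ?thesis using rf False by auto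
    qed
  qed
  then have "L \<in> routes_of x" unfolding routes_of_def using isr by simp
  then show ?thesis using Ld(3) by blast
qed

end



lemma rv_None_iff: "m \<le> Suc (length R) \<Longrightarrow> route_vtx R m = None \<longleftrightarrow> m = 0 \<or> m = Suc (length R)"
  using rv_cases[of m R] by auto

lemma rv_rev:
  assumes "m \<le> Suc (length R)"
  shows "route_vtx (rev R) m = route_vtx R (Suc (length R) - m)"
proof -
  consider "m = 0" | "m = Suc (length R)" | "0 < m" "m \<le> length R" using assms by linarith
  then show ?thesis
  proof cases
    case 3
    have "rev R ! (m - 1) = R ! (length R - m)" using 3 by (simp add: rev_nth)
    moreover have "Suc (length R) - m - 1 = length R - m" using 3 by simp
    ultimately show ?thesis using 3 unfolding route_vtx_def by auto
  qed (auto simp: route_vtx_def)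
qed

context plan begin

lemma rev_route: assumes R: "R \<in> routes_of x" shows "rev R \<in> routes_of x"
proof -
  have isr: "is_route R" by (rule routes_of_route[OF R])
  then have isr': "is_route (rev R)" unfolding is_route_def by simp
  let ?l = "length R"
  have dR: "distinct R" using isr unfolding is_route_def by simp
  have "x e = route_vec (rev R) e" if eE: "e \<in> edges" and int: "e \<inter> Some ` set (rev R) \<noteq> {}" for e
  proof -
    from int obtain i where i: "i < ?l" "Some (R ! i) \<in> e" by (auto simp: in_set_conv_nth)
    have edc: "e \<in> delta_cust (R ! i)" unfolding delta_cust_def using eE i by simp
    obtain w where w: "w \<noteq> Some (R ! i)" "e = {Some (R ! i), w}" by (rule delta_custE[OF edc])
    let ?i' = "?l - 1 - i"
    have i': "?i' < length (rev R)" using i by simp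
    have ri: "rev R ! ?i' = R ! i" using i by (simp add: rev_nth)
    have w': "w \<noteq> Some (rev R ! ?i')" using w ri by simp
    have "route_vec (rev R) e = (if w = route_vtx (rev R) ?i' then 1 else 0)
         + (if w = route_vtx (rev R) (Suc (Suc ?i')) then 1 else 0)"
      using route_vec_formula[OF isr' i' w'] w(2) ri by simp
    moreover have "route_vtx (rev R) ?i' = route_vtx R (Suc (Suc i))"
      using rv_rev[of ?i' R] i by (simp add: Suc_diff_Suc)
    moreover have "route_vtx (rev R) (Suc (Suc ?i')) = route_vtx R i"
      using rv_rev[of "Suc (Suc ?i')" R] i by simp
    moreover have "x e = route_vec R e" using routes_ofD[OF R eE] int by simp
    moreover have "route_vec R e = (if w = route_vtx R i then 1 else 0)
         + (if w = route_vtx R (Suc (Suc i)) then 1 else 0)"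
      using route_vec_formula[OF isr i(1) w(1)] w(2) by simp
    ultimately show ?thesis by simp
  qed
  then show ?thesis unfolding routes_of_def using isr' by simp
qed

lemma share_head:
  assumes R: "R \<in> routes_of x" and R': "R' \<in> routes_of x" and h: "R' ! 0 = R ! 0"
  shows "length R \<le> length R' \<and> (\<forall>k < length R. R' ! k = R ! k)"
proof -
  have isr: "is_route R" by (rule routes_of_route[OF R])
  have isr': "is_route R'" by (rule routes_of_route[OF R'])
  have dR: "distinct R" using isr unfolding is_route_def by simp
  have dR': "distinct R'" using isr' unfolding is_route_def by simp
  have ne: "R \<noteq> []" "R' \<noteq> []" using isr isr' unfolding is_route_def by auto
  have main: "k < length R \<Longrightarrow> (\<forall>k'\<le>k. k' < length R' \<and> R' ! k' = R ! k')" for k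
  proof (induction k)
    case 0 then show ?case using ne h by simp
  next
    case (Suc k)
    then have IH: "\<forall>k'\<le>k. k' < length R' \<and> R' ! k' = R ! k'" by simp
    have k: "k < length R'" "R' ! k = R ! k" using IH by auto
    have kl: "Suc k < length R" using Suc.prems .
    have rvk: "route_vtx R' k = route_vtx R k"
    proof (cases k)
      case 0 then show ?thesis by simp
    next
      case (Suc k0)
      then have "R' ! k0 = R ! k0" "k0 < length R'" using IH by auto
      then show ?thesis using Suc kl rv_Suc[of k0 R] rv_Suc[of k0 R'] by simp
    qed
    let ?b = "route_vtx R (Suc (Suc k))"
    have b: "?b = Some (R ! Suc k)" using rv_Suc[of "Suc k" R] kl by simp
    have bS: "?b \<noteq> Some (R ! k)" using b nth_eq_iff_index_eq[OF dR, of "Suc k" k] kl by simp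
    have ab: "route_vtx R k \<noteq> ?b"
    proof
      assume "route_vtx R k = ?b"
      then have "k \<in> {0, Suc (length R)} \<and> Suc (Suc k) \<in> {0, Suc (length R)}"
        using rv_eq_iff[OF dR, of k "Suc (Suc k)"] kl by simp
      then show False using kl by simp
    qed
    have "x {Some (R ! k), ?b} = 1" using route_x[OF R _ bS] kl ab by simp
    then have nz: "x {Some (R' ! k), ?b} \<noteq> 0" using k by simp
    have bS': "?b \<noteq> Some (R' ! k)" using bS k by simp
    have "?b = route_vtx R' k \<or> ?b = route_vtx R' (Suc (Suc k))"
      by (rule route_x_pos[OF R' k(1) bS' nz])
    then have b2: "?b = route_vtx R' (Suc (Suc k))" using rvk ab by simp
    have le: "Suc (Suc k) \<le> Suc (length R')" using k by simp
    have "Suc (Suc k) \<noteq> Suc (length R')" using b2 b rv_None_iff[OF le] by auto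
    then have k1: "Suc k < length R'" using k by simp
    then have "R' ! Suc k = R ! Suc k" using b2 b rv_Suc[of "Suc k" R'] by simp
    with k1 IH show ?case by (auto simp: le_Suc_eq)
  qed
  have "length R \<le> length R'"
    using main[of "length R - 1"] ne by (cases "length R") auto
  moreover have "\<forall>k < length R. R' ! k = R ! k" using main by blast
  ultimately show ?thesis by simp
qed

lemma share_head_eq:
  assumes R: "R \<in> routes_of x" and R': "R' \<in> routes_of x" and h: "R' ! 0 = R ! 0"
  shows "R' = R"
proof -
  have 1: "length R \<le> length R'" "\<forall>k < length R. R' ! k = R ! k" using share_head[OF R R' h] by auto
  have 2: "length R' \<le> length R" using share_head[OF R' R h[symmetric]] by auto
  show ?thesis using 1 2 by (intro nth_equalityI) auto
qed

lemma share_back: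
  assumes R: "R \<in> routes_of x" and R': "R' \<in> routes_of x"
  shows "j < length R' \<Longrightarrow> R' ! j \<in> set R \<Longrightarrow> R' ! 0 \<in> set R"
proof (induction j)
  case 0 then show ?case by simp
next
  case (Suc j)
  have isr': "is_route R'" by (rule routes_of_route[OF R'])
  have dR': "distinct R'" using isr' unfolding is_route_def by simp
  obtain i where i: "i < length R" "R ! i = R' ! Suc j" using Suc.prems(2) by (auto simp: in_set_conv_nth)
  let ?w = "Some (R' ! j)"
  have wrv: "?w = route_vtx R' (Suc j)" using rv_Suc[of j R'] Suc.prems by simp
  have wS: "?w \<noteq> Some (R' ! Suc j)" using nth_eq_iff_index_eq[OF dR', of j "Suc j"] Suc.prems by simp
  have "x {Some (R' ! Suc j), ?w} \<noteq> 0" using route_x[OF R' Suc.prems(1) wS] wrv by simp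
  then have nz: "x {Some (R ! i), ?w} \<noteq> 0" using i by simp
  have wS2: "?w \<noteq> Some (R ! i)" using wS i by simp
  have "?w = route_vtx R i \<or> ?w = route_vtx R (Suc (Suc i))" by (rule route_x_pos[OF R i(1) wS2 nz])
  then have "R' ! j \<in> set R" using rv_Some_in[of R i] rv_Some_in[of R "Suc (Suc i)"] i by auto
  then show ?case using Suc.IH Suc.prems by simp
qed

lemma uniq:
  assumes R: "R \<in> routes_of x" and R': "R' \<in> routes_of x" and v: "v \<in> set R" "v \<in> set R'"
  shows "R' = R \<or> R' = rev R"
proof -
  have isr: "is_route R" by (rule routes_of_route[OF R])
  have isr': "is_route R'" by (rule routes_of_route[OF R'])
  have dR: "distinct R" using isr unfolding is_route_def by simp
  have ne: "R \<noteq> []" "R' \<noteq> []" using isr isr' unfolding is_route_def by auto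
  obtain j where j: "j < length R'" "R' ! j = v" using v(2) by (auto simp: in_set_conv_nth)
  have "R' ! 0 \<in> set R" using share_back[OF R R' j(1)] j v by simp
  then obtain i where i: "i < length R" "R ! i = R' ! 0" by (auto simp: in_set_conv_nth)
  have nS: "None \<noteq> Some (R' ! 0)" by simp
  have "x {Some (R' ! 0), None} \<noteq> 0" using route_x[OF R' _ nS] ne by simp
  then have nz: "x {Some (R ! i), None} \<noteq> 0" using i by simp
  have "None = route_vtx R i \<or> None = route_vtx R (Suc (Suc i))"
    by (rule route_x_pos[OF R i(1) _ nz]) simp
  then have "i = 0 \<or> Suc (Suc i) = Suc (length R)"
    using rv_None_iff[of i R] rv_None_iff[of "Suc (Suc i)" R] i by auto
  then show ?thesis
  proof
    assume "i = 0"
    then show ?thesis using share_head_eq[OF R R'] i by simp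
  next
    assume "Suc (Suc i) = Suc (length R)"
    then have "i = length R - 1" by simp
    then have "rev R ! 0 = R' ! 0" using i ne by (simp add: rev_nth)
    then show ?thesis using share_head_eq[OF rev_route[OF R] R'] by simp
  qed
qed

end



definition seg :: "'a list \<Rightarrow> nat \<Rightarrow> nat \<Rightarrow> 'a set" where
  "seg R a b = (\<lambda>k. R ! k) ` {a..<b}"

lemma sum_seg:
  assumes "distinct R" "b \<le> length R"
  shows "sum h (seg R a b) = (\<Sum>k = a..<b. h (R ! k))"
proof -
  have "inj_on (\<lambda>k. R ! k) {a..<b}" using inj_on_nth[OF assms(1), of "{a..<b}"] assms(2) by simp
  then show ?thesis unfolding seg_def by (simp add: sum.reindex)
qed

lemma card_seg:
  assumes "distinct R" "b \<le> length R"
  shows "card (seg R a b) = b - a"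
proof -
  have "inj_on (\<lambda>k. R ! k) {a..<b}" using inj_on_nth[OF assms(1), of "{a..<b}"] assms(2) by simp
  then show ?thesis unfolding seg_def by (simp add: card_image)
qed

definition pos :: "'a list \<Rightarrow> 'a \<Rightarrow> nat" where
  "pos R v = (THE k. k < length R \<and> R ! k = v)"

lemma pos_nth: "distinct R \<Longrightarrow> k < length R \<Longrightarrow> pos R (R ! k) = k"
  unfolding pos_def by (rule the_equality) (auto simp: nth_eq_iff_index_eq)

lemma greedy:
  fixes C :: real and d :: "'s \<Rightarrow> 'v::finite \<Rightarrow> real" and z :: "real^'v"
  assumes R: "is_route R" and C: "0 < C" and dnn: "\<forall>w. 0 \<le> d xi w"
    and z: "\<forall>w. z $ w \<in> \<int> \<and> 0 \<le> z $ w"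
    and cons: "\<forall>a b. a < b \<longrightarrow> b \<le> length R \<longrightarrow>
         real_of_int (kxi C d xi (seg R a b)) - 1 \<le> (\<Sum>w\<in>seg R a b. z $ w)"
  shows "z \<in> Yxi C d xi R"
proof -
  let ?l = "length R"
  have dR: "distinct R" using R unfolding is_route_def by simp
  let ?t = "\<lambda>k. d xi (R ! k) - C * z $ (R ! k)"
  define L where "L = rec_nat 0 (\<lambda>k Lk. max 0 (Lk + ?t k))"
  have L0: "L 0 = 0" unfolding L_def by simp
  have LS: "\<And>k. L (Suc k) = max 0 (L k + ?t k)" unfolding L_def by simp
  have Lnn: "\<And>k. 0 \<le> L k" by (case_tac k) (simp_all add: L0 LS)
  have inv: "\<exists>a\<le>i. L i = (\<Sum>k = a..<i. ?t k)" for i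
  proof (induction i)
    case 0 then show ?case using L0 by simp
  next
    case (Suc i)
    then obtain a where a: "a \<le> i" "L i = (\<Sum>k = a..<i. ?t k)" by blast
    show ?case
    proof (cases "L i + ?t i \<le> 0")
      case True
      then have "L (Suc i) = (\<Sum>k = Suc i..<Suc i. ?t k)" using LS[of i] by simp
      then show ?thesis by blast
    next
      case False
      then have "L (Suc i) = L i + ?t i" using LS[of i] by simp
      also have "\<dots> = (\<Sum>k = a..<Suc i. ?t k)" using a by (simp add: sum.atLeastLessThan_Suc)
      finally show ?thesis using a by (intro exI[of _ a]) simp
    qed
  qed
  have LC: "L i \<le> C" if i: "i \<le> ?l" for i
  proof -
    obtain a where a: "a \<le> i" "L i = (\<Sum>k = a..<i. ?t k)" using inv by blast
    show ?thesis
    proof (cases "a = i")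
      case True then show ?thesis using a C by simp
    next
      case False
      then have ai: "a < i" using a by simp
      let ?D = "\<Sum>w\<in>seg R a i. d xi w" and ?Z = "\<Sum>w\<in>seg R a i. z $ w"
      have "real_of_int (kxi C d xi (seg R a i)) - 1 \<le> ?Z" using cons ai i by blast
      moreover have "?D / C \<le> real_of_int (kxi C d xi (seg R a i))"
        unfolding kxi_def by simp
      ultimately have "?D / C - 1 \<le> ?Z" by simp
      then have "?D - C \<le> C * ?Z" using C by (simp add: field_simps)
      moreover have "?D = (\<Sum>k = a..<i. d xi (R ! k))" using sum_seg[OF dR i] by simp
      moreover have "?Z = (\<Sum>k = a..<i. z $ (R ! k))" using sum_seg[OF dR i] by simp
      moreover have "(\<Sum>k = a..<i. ?t k) = (\<Sum>k = a..<i. d xi (R ! k)) - C * (\<Sum>k = a..<i. z $ (R ! k))"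
        by (simp add: sum_subtractf sum_distrib_left)
      ultimately show ?thesis using a by simp
    qed
  qed
  define f :: "'v option \<times> 'v option \<Rightarrow> real" where
    "f = (\<lambda>(u, w). case w of None \<Rightarrow> L ?l | Some v \<Rightarrow> L (pos R v))"
  define g :: "'v \<Rightarrow> real" where
    "g = (\<lambda>v. L (pos R v) + d xi (R ! pos R v) - L (Suc (pos R v)))"
  have fnn: "\<forall>a. 0 \<le> f a" unfolding f_def using Lnn by (auto split: option.splits)
  have f_in: "f (u, route_vtx R i) = L (i - 1)" if "1 \<le> i" "i \<le> Suc ?l" for u i
  proof (cases "i = Suc ?l")
    case True then show ?thesis unfolding f_def by simp
  next
    case False
    then have "i - 1 < ?l" using that by simp
    then have "route_vtx R i = Some (R ! (i - 1))" using rv_Suc[of "i - 1" R] that by simp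
    then show ?thesis unfolding f_def using pos_nth[OF dR \<open>i - 1 < ?l\<close>] by simp
  qed
  have g_at: "g (R ! k) = L k + d xi (R ! k) - L (Suc k)" if "k < ?l" for k
    unfolding g_def using pos_nth[OF dR that] by simp
  have gnn: "\<forall>v. 0 \<le> g v"
  proof
    fix v
    let ?p = "pos R v"
    have "0 \<le> C * z $ (R ! ?p)" using z C by simp
    moreover have "0 \<le> L ?p + d xi (R ! ?p)" using Lnn[of ?p] dnn by (simp add: add_nonneg_nonneg)
    ultimately have "L (Suc ?p) \<le> L ?p + d xi (R ! ?p)"
      using LS[of ?p] by (simp add: max_def)
    then show "0 \<le> g v" unfolding g_def by simp
  qed
  have eqs: "\<forall>i\<in>{1..?l}.
      f (route_vtx R (i - 1), route_vtx R i) + d xi (R ! (i - 1))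
        = f (route_vtx R i, route_vtx R (i + 1)) + g (R ! (i - 1))"
  proof
    fix i assume i: "i \<in> {1..?l}"
    have i1: "i - 1 < ?l" "Suc (i - 1) = i" using i by auto
    have "f (route_vtx R (i - 1), route_vtx R i) = L (i - 1)" using f_in[of i] i by simp
    moreover have "f (route_vtx R i, route_vtx R (i + 1)) = L i" using f_in[of "i + 1"] i by simp
    moreover have "g (R ! (i - 1)) = L (i - 1) + d xi (R ! (i - 1)) - L i"
      using g_at[of "i - 1"] i1 by simp
    ultimately show "f (route_vtx R (i - 1), route_vtx R i) + d xi (R ! (i - 1))
        = f (route_vtx R i, route_vtx R (i + 1)) + g (R ! (i - 1))" by simp
  qed
  have fC: "\<forall>i\<in>{1..?l + 1}. f (route_vtx R (i - 1), route_vtx R i) \<le> C"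
  proof
    fix i assume i: "i \<in> {1..?l + 1}"
    then have "i - 1 \<le> ?l" "1 \<le> i" "i \<le> Suc ?l" by auto
    then show "f (route_vtx R (i - 1), route_vtx R i) \<le> C" using f_in[of i] LC[of "i - 1"] by simp
  qed
  have gC: "\<forall>i\<in>{1..?l}. g (R ! (i - 1)) \<le> C * z $ (R ! (i - 1))"
  proof
    fix i assume i: "i \<in> {1..?l}"
    have i1: "i - 1 < ?l" "Suc (i - 1) = i" using i by auto
    have "L i \<ge> L (i - 1) + ?t (i - 1)" using LS[of "i - 1"] i1 by simp
    then show "g (R ! (i - 1)) \<le> C * z $ (R ! (i - 1))" using g_at[of "i - 1"] i1 by simp
  qed
  show ?thesis unfolding Yxi_def using z fnn gnn eqs fC gC by blast
qed




lemma card_shift_diff: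
  fixes I :: "nat set"
  assumes fin: "finite I" and pos: "\<forall>i\<in>I. 1 \<le> i"
  defines "J \<equiv> {k. Suc k \<in> I}"
  shows "card (I - J) = card (J - I)" and "finite J"
proof -
  have Jim: "J = (\<lambda>i. i - 1) ` I"
  proof (rule set_eqI, rule iffI)
    fix k assume "k \<in> J" then have "Suc k \<in> I" unfolding J_def by simp
    then show "k \<in> (\<lambda>i. i - 1) ` I" by (intro image_eqI[of _ _ "Suc k"]) auto
  next
    fix k assume "k \<in> (\<lambda>i. i - 1) ` I"
    then obtain i where "i \<in> I" "k = i - 1" by auto
    with pos have "Suc k = i" by auto
    with \<open>i \<in> I\<close> show "k \<in> J" unfolding J_def by simp
  qed
  have inj: "inj_on (\<lambda>i. i - 1) I"
  proof (rule inj_onI)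
    fix a b assume "a \<in> I" "b \<in> I" "a - 1 = b - 1"
    moreover have "1 \<le> a" "1 \<le> b" using pos calculation by auto
    ultimately show "a = b" by arith
  qed
  have cJ: "card J = card I" unfolding Jim using card_image[OF inj] .
  show finJ: "finite J" unfolding Jim using fin by simp
  have "card (I - J) = card I - card (I \<inter> J)" using fin by (simp add: card_Diff_subset_Int)
  moreover have "card (J - I) = card J - card (J \<inter> I)" using finJ by (simp add: card_Diff_subset_Int)
  ultimately show "card (I - J) = card (J - I)" using cJ by (simp add: Int_commute)
qed

lemma flow_bound:
  fixes C :: real and d :: "'s \<Rightarrow> 'v::finite \<Rightarrow> real" and z :: "real^'v" and S :: "'v set"
  assumes R: "is_route R" and zY: "z \<in> Yxi C d xi R"
  defines "I \<equiv> {i \<in> {1..length R}. R ! (i - 1) \<in> S}"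
  shows "2 * (\<Sum>w\<in>S \<inter> set R. d xi w) \<le> 2 * C * (\<Sum>w\<in>S \<inter> set R. z $ w)
           + C * real (card {k \<in> {0..length R}. (k \<in> I) \<noteq> (Suc k \<in> I)})"
proof -
  let ?l = "length R"
  have dR: "distinct R" using R unfolding is_route_def by simp
  obtain f :: "'v option \<times> 'v option \<Rightarrow> real" and g :: "'v \<Rightarrow> real" where
    fnn: "\<forall>a. 0 \<le> f a" and gnn: "\<forall>v. 0 \<le> g v" and
    eqs: "\<forall>i\<in>{1..?l}. f (route_vtx R (i - 1), route_vtx R i) + d xi (R ! (i - 1))
             = f (route_vtx R i, route_vtx R (i + 1)) + g (R ! (i - 1))" and
    fC: "\<forall>i\<in>{1..?l + 1}. f (route_vtx R (i - 1), route_vtx R i) \<le> C" and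
    gC: "\<forall>i\<in>{1..?l}. g (R ! (i - 1)) \<le> C * z $ (R ! (i - 1))"
    using zY unfolding Yxi_def by blast
  define F where "F k = f (route_vtx R k, route_vtx R (Suc k))" for k
  have Fnn: "\<And>k. 0 \<le> F k" unfolding F_def using fnn by simp
  have FC: "\<And>k. k \<le> ?l \<Longrightarrow> F k \<le> C"
  proof -
    fix k assume "k \<le> ?l"
    then show "F k \<le> C" using fC[rule_format, of "Suc k"] unfolding F_def by simp
  qed
  have Imem: "\<And>i. i \<in> I \<Longrightarrow> 1 \<le> i \<and> i \<le> ?l" unfolding I_def by auto
  have Isub: "I \<subseteq> {1..?l}" unfolding I_def by auto
  have finI: "finite I" using Isub finite_subset by blast
  have Ipos: "\<forall>i\<in>I. 1 \<le> i" using Isub by auto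
  define J where "J = {k. Suc k \<in> I}"
  have cIJ: "card (I - J) = card (J - I)" and finJ: "finite J"
    using card_shift_diff[OF finI Ipos] unfolding J_def by auto
  have eqI: "\<And>i. i \<in> I \<Longrightarrow> F (i - 1) + d xi (R ! (i - 1)) = F i + g (R ! (i - 1))"
  proof -
    fix i assume i: "i \<in> I"
    then have i1: "i \<in> {1..?l}" using Imem[of i] by auto
    then have "Suc (i - 1) = i" by auto
    then show "F (i - 1) + d xi (R ! (i - 1)) = F i + g (R ! (i - 1))"
      using eqs[rule_format, OF i1] unfolding F_def by simp
  qed
  let ?h = "\<lambda>i. R ! (i - 1)"
  have injh: "inj_on ?h I"
  proof (rule inj_onI)
    fix a b assume a: "a \<in> I" and b: "b \<in> I" and e: "R ! (a - 1) = R ! (b - 1)"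
    have "a - 1 < ?l" "b - 1 < ?l" using Imem[OF a] Imem[OF b] by auto
    then have "a - 1 = b - 1" using e nth_eq_iff_index_eq[OF dR] by blast
    moreover have "1 \<le> a" "1 \<le> b" using Imem[OF a] Imem[OF b] by auto
    ultimately show "a = b" by arith
  qed
  have himg: "?h ` I = S \<inter> set R"
  proof (rule set_eqI, rule iffI)
    fix w assume "w \<in> ?h ` I"
    then obtain i where i: "i \<in> I" "w = R ! (i - 1)" by auto
    then have "i - 1 < ?l" using Imem[of i] by auto
    then show "w \<in> S \<inter> set R" using i unfolding I_def by auto
  next
    fix w assume w: "w \<in> S \<inter> set R"
    then obtain k where k: "k < ?l" "R ! k = w" by (auto simp: in_set_conv_nth)
    then have "Suc k \<in> I" unfolding I_def using w by auto
    then show "w \<in> ?h ` I" using k by (intro image_eqI[of _ _ "Suc k"]) auto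
  qed
  have sd: "(\<Sum>w\<in>S \<inter> set R. d xi w) = (\<Sum>i\<in>I. d xi (R ! (i - 1)))"
    unfolding himg[symmetric] by (rule sum.reindex[OF injh, unfolded comp_def])
  have sz: "(\<Sum>w\<in>S \<inter> set R. z $ w) = (\<Sum>i\<in>I. z $ (R ! (i - 1)))"
    unfolding himg[symmetric] by (rule sum.reindex[OF injh, unfolded comp_def])
  have "(\<Sum>i\<in>I. d xi (R ! (i - 1))) = (\<Sum>i\<in>I. g (R ! (i - 1))) + ((\<Sum>i\<in>I. F i) - (\<Sum>i\<in>I. F (i - 1)))"
  proof -
    have "(\<Sum>i\<in>I. d xi (R ! (i - 1))) = (\<Sum>i\<in>I. g (R ! (i - 1)) + F i - F (i - 1))"
      by (rule sum.cong) (use eqI in \<open>auto simp: algebra_simps\<close>)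
    also have "\<dots> = (\<Sum>i\<in>I. g (R ! (i - 1))) + ((\<Sum>i\<in>I. F i) - (\<Sum>i\<in>I. F (i - 1)))"
      by (simp add: sum.distrib sum_subtractf)
    finally show ?thesis .
  qed
  moreover have "(\<Sum>i\<in>I. g (R ! (i - 1))) \<le> C * (\<Sum>i\<in>I. z $ (R ! (i - 1)))"
  proof -
    have "(\<Sum>i\<in>I. g (R ! (i - 1))) \<le> (\<Sum>i\<in>I. C * z $ (R ! (i - 1)))"
      by (rule sum_mono) (use gC Isub in auto)
    then show ?thesis by (simp add: sum_distrib_left)
  qed
  moreover have "(\<Sum>i\<in>I. F i) - (\<Sum>i\<in>I. F (i - 1)) \<le> C * real (card (I - J))"
  proof -
    have s1: "(\<Sum>i\<in>I. F (i - 1)) = (\<Sum>k\<in>J. F k)"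
    proof -
      have Jim: "J = (\<lambda>i. i - 1) ` I"
      proof (rule set_eqI, rule iffI)
        fix k assume "k \<in> J" then have "Suc k \<in> I" unfolding J_def by simp
        then show "k \<in> (\<lambda>i. i - 1) ` I" by (intro image_eqI[of _ _ "Suc k"]) auto
      next
        fix k assume "k \<in> (\<lambda>i. i - 1) ` I"
        then obtain i where "i \<in> I" "k = i - 1" by auto
        with Ipos have "Suc k = i" by auto
        with \<open>i \<in> I\<close> show "k \<in> J" unfolding J_def by simp
      qed
      have inj: "inj_on (\<lambda>i. i - 1) I"
      proof (rule inj_onI)
        fix a b assume "a \<in> I" "b \<in> I" "a - 1 = b - 1"
        moreover have "1 \<le> a" "1 \<le> b" using Ipos calculation by auto
        ultimately show "a = b" by arith
      qed
      show ?thesis unfolding Jim by (rule sum.reindex[OF inj, unfolded comp_def, symmetric])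
    qed
    have a: "(\<Sum>i\<in>I. F i) = (\<Sum>i\<in>I \<inter> J. F i) + (\<Sum>i\<in>I - J. F i)"
      using finI by (metis sum.Int_Diff)
    have b: "(\<Sum>k\<in>J. F k) = (\<Sum>i\<in>I \<inter> J. F i) + (\<Sum>i\<in>J - I. F i)"
      using finJ by (metis sum.Int_Diff Int_commute)
    have c: "(\<Sum>i\<in>J - I. F i) \<ge> 0" by (rule sum_nonneg) (use Fnn in auto)
    have d: "(\<Sum>i\<in>I - J. F i) \<le> (\<Sum>i\<in>I - J. C)"
      by (rule sum_mono) (use FC Isub in auto)
    have "(\<Sum>i\<in>I - J. C) = C * real (card (I - J))" by simp
    then show ?thesis using a b c d s1 by linarith
  qed
  ultimately have main0: "(\<Sum>i\<in>I. d xi (R ! (i - 1))) \<le> C * (\<Sum>i\<in>I. z $ (R ! (i - 1))) + C * real (card (I - J))"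
    by linarith
  have main: "(\<Sum>w\<in>S \<inter> set R. d xi w) \<le> C * (\<Sum>w\<in>S \<inter> set R. z $ w) + C * real (card (I - J))"
    unfolding sd sz by (rule main0)
  have U: "{k \<in> {0..?l}. (k \<in> I) \<noteq> (Suc k \<in> I)} = (I - J) \<union> (J - I)"
    unfolding J_def using Isub by auto
  have "card ((I - J) \<union> (J - I)) = card (I - J) + card (J - I)"
    by (rule card_Un_disjoint) (use finI finJ in auto)
  then have "card {k \<in> {0..?l}. (k \<in> I) \<noteq> (Suc k \<in> I)} = 2 * card (I - J)"
    using U cIJ by simp
  then show ?thesis using main by simp
qed




definition cutS :: "'v set \<Rightarrow> 'v option set set" where
  "cutS S = {e \<in> edges. card (e \<inter> Some ` S) = 1}"

lemma fiber_sum: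
  assumes "finite A" "finite E"
  shows "(\<Sum>e\<in>E. card {i\<in>A. h i = e}) = card {i\<in>A. h i \<in> E}"
proof -
  have "{i\<in>A. h i \<in> E} = (\<Union>e\<in>E. {i\<in>A. h i = e})" by auto
  moreover have "card (\<Union>e\<in>E. {i\<in>A. h i = e}) = (\<Sum>e\<in>E. card {i\<in>A. h i = e})"
    by (rule card_UN_disjoint) (use assms in auto)
  ultimately show ?thesis by simp
qed

lemma card_dbl_int:
  assumes "a \<noteq> b" shows "card ({a, b} \<inter> A) = 1 \<longleftrightarrow> (a \<in> A) \<noteq> (b \<in> A)"
  using assms by (cases "a \<in> A"; cases "b \<in> A") (auto simp: Int_insert_left)

lemma route_cut_count:
  fixes R :: "'v::finite list" and S :: "'v set"
  assumes R: "is_route R"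
  defines "I \<equiv> {i \<in> {1..length R}. R ! (i - 1) \<in> S}"
  shows "real (card {k \<in> {0..length R}. (k \<in> I) \<noteq> (Suc k \<in> I)}) = (\<Sum>e\<in>cutS S. route_vec R e)"
proof -
  let ?l = "length R"
  have dR: "distinct R" and ne: "R \<noteq> []" using R unfolding is_route_def by auto
  let ?h = "\<lambda>i. {route_vtx R (i - 1), route_vtx R i}"
  have finC: "finite (cutS S)" unfolding cutS_def by (rule finite_subset[OF _ finite_edges]) auto
  have "(\<Sum>e\<in>cutS S. route_vec R e) = real (\<Sum>e\<in>cutS S. card {i\<in>{1..?l + 1}. ?h i = e})"
    unfolding route_vec_def by simp
  also have "(\<Sum>e\<in>cutS S. card {i\<in>{1..?l + 1}. ?h i = e}) = card {i\<in>{1..?l + 1}. ?h i \<in> cutS S}"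
    by (rule fiber_sum) (use finC in auto)
  also have "{i\<in>{1..?l + 1}. ?h i \<in> cutS S} = Suc ` {k \<in> {0..?l}. (k \<in> I) \<noteq> (Suc k \<in> I)}"
  proof -
    have memI: "route_vtx R m \<in> Some ` S \<longleftrightarrow> m \<in> I" if "m \<le> Suc ?l" for m
      using rv_cases[OF that] unfolding I_def by auto
    have key: "?h (Suc k) \<in> cutS S \<longleftrightarrow> (k \<in> I) \<noteq> (Suc k \<in> I)" if k: "k \<le> ?l" for k
    proof -
      have neq: "route_vtx R k \<noteq> route_vtx R (Suc k)"
        using rv_eq_iff[OF dR, of k "Suc k"] k ne by auto
      have "?h (Suc k) \<in> cutS S \<longleftrightarrow> card ({route_vtx R k, route_vtx R (Suc k)} \<inter> Some ` S) = 1"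
        unfolding cutS_def using neq by simp
      also have "\<dots> \<longleftrightarrow> (route_vtx R k \<in> Some ` S) \<noteq> (route_vtx R (Suc k) \<in> Some ` S)"
        by (rule card_dbl_int[OF neq])
      also have "\<dots> \<longleftrightarrow> (k \<in> I) \<noteq> (Suc k \<in> I)" using memI[of k] memI[of "Suc k"] k by simp
      finally show ?thesis .
    qed
    show ?thesis
    proof (rule set_eqI, rule iffI)
      fix i assume i: "i \<in> {i\<in>{1..?l + 1}. ?h i \<in> cutS S}"
      then obtain k where k: "i = Suc k" "k \<le> ?l" by (cases i) auto
      then show "i \<in> Suc ` {k \<in> {0..?l}. (k \<in> I) \<noteq> (Suc k \<in> I)}" using i key[of k] by auto
    next
      fix i assume "i \<in> Suc ` {k \<in> {0..?l}. (k \<in> I) \<noteq> (Suc k \<in> I)}"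
      then obtain k where k: "i = Suc k" "k \<le> ?l" "(k \<in> I) \<noteq> (Suc k \<in> I)" by auto
      then show "i \<in> {i\<in>{1..?l + 1}. ?h i \<in> cutS S}" using key[of k] by auto
    qed
  qed
  also have "card (Suc ` {k \<in> {0..?l}. (k \<in> I) \<noteq> (Suc k \<in> I)}) = card {k \<in> {0..?l}. (k \<in> I) \<noteq> (Suc k \<in> I)}"
    by (rule card_image) simp
  finally show ?thesis by simp
qed

lemma route_vec_nz:
  assumes "route_vec R e \<noteq> 0" "a \<in> e"
  shows "a = None \<or> (\<exists>w\<in>set R. a = Some w)"
proof -
  have "card {i \<in> {1..length R + 1}. {route_vtx R (i - 1), route_vtx R i} = e} \<noteq> 0"
    using assms(1) unfolding route_vec_def by simp
  then have "{i \<in> {1..length R + 1}. {route_vtx R (i - 1), route_vtx R i} = e} \<noteq> {}"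
    by (metis card.empty)
  then obtain i where i: "i \<in> {1..length R + 1}" "{route_vtx R (i - 1), route_vtx R i} = e"
    by blast
  then have "a = route_vtx R (i - 1) \<or> a = route_vtx R i" using assms(2) by auto
  moreover have "i - 1 \<le> Suc (length R)" "i \<le> Suc (length R)" using i by auto
  ultimately show ?thesis using rv_Some_in[of R] by (cases a) auto
qed

lemma edge_has_some: "e \<in> edges \<Longrightarrow> \<exists>w. Some w \<in> e"
  by (erule edgesE) (metis insertCI not_None_eq)

context plan begin

lemma exists_RR: "\<exists>RR. finite RR \<and> RR \<subseteq> routes_of x \<and>
   (\<forall>R1\<in>RR. \<forall>R2\<in>RR. R1 \<noteq> R2 \<longrightarrow> set R1 \<inter> set R2 = {}) \<and> (\<forall>v. \<exists>R\<in>RR. v \<in> set R)"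
proof -
  define rep where "rep t = (SOME R. R \<in> routes_of x \<and> set R = t)" for t
  let ?T = "set ` routes_of x"
  have rep: "rep t \<in> routes_of x \<and> set (rep t) = t" if "t \<in> ?T" for t
  proof -
    from that have "\<exists>R. R \<in> routes_of x \<and> set R = t" by auto
    then show ?thesis unfolding rep_def by (rule someI_ex)
  qed
  define RR where "RR = rep ` ?T"
  have fin: "finite RR" unfolding RR_def by (rule finite_imageI) (rule finite_subset[of _ UNIV]; simp)
  have sub: "RR \<subseteq> routes_of x" unfolding RR_def using rep by auto
  have disj: "\<forall>R1\<in>RR. \<forall>R2\<in>RR. R1 \<noteq> R2 \<longrightarrow> set R1 \<inter> set R2 = {}"
  proof (intro ballI impI)
    fix R1 R2 assume R1: "R1 \<in> RR" and R2: "R2 \<in> RR" and ne: "R1 \<noteq> R2"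
    show "set R1 \<inter> set R2 = {}"
    proof (rule ccontr)
      assume "set R1 \<inter> set R2 \<noteq> {}"
      then obtain v where v: "v \<in> set R1" "v \<in> set R2" by auto
      obtain t1 where t1: "t1 \<in> ?T" "R1 = rep t1" using R1 unfolding RR_def by auto
      obtain t2 where t2: "t2 \<in> ?T" "R2 = rep t2" using R2 unfolding RR_def by auto
      have "R2 = R1 \<or> R2 = rev R1" using uniq[OF _ _ v] R1 R2 sub by auto
      then have "set R2 = set R1" by auto
      then have "t1 = t2" using rep[OF t1(1)] rep[OF t2(1)] t1 t2 by simp
      then show False using ne t1 t2 by simp
    qed
  qed
  have cov: "\<forall>v. \<exists>R\<in>RR. v \<in> set R"
  proof
    fix v
    obtain R where R: "R \<in> routes_of x" "v \<in> set R" using cover by blast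
    then have "set R \<in> ?T" by simp
    then show "\<exists>R\<in>RR. v \<in> set R" using rep[of "set R"] R unfolding RR_def by blast
  qed
  show ?thesis using fin sub disj cov by blast
qed

lemma sum_RR_le:
  assumes fin: "finite RR" and sub: "RR \<subseteq> routes_of x"
    and disj: "\<forall>R1\<in>RR. \<forall>R2\<in>RR. R1 \<noteq> R2 \<longrightarrow> set R1 \<inter> set R2 = {}"
    and e: "e \<in> edges"
  shows "(\<Sum>R\<in>RR. route_vec R e) \<le> x e"
proof (cases "\<exists>R\<in>RR. route_vec R e \<noteq> 0")
  case False
  then have "(\<Sum>R\<in>RR. route_vec R e) = 0" by simp
  then show ?thesis using x_nonneg[OF e] by simp
next
  case True
  then obtain R0 where R0: "R0 \<in> RR" "route_vec R0 e \<noteq> 0" by blast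
  obtain w where w: "Some w \<in> e" using edge_has_some[OF e] by blast
  have w0: "w \<in> set R0" using route_vec_nz[OF R0(2) w] by auto
  have z: "route_vec R e = 0" if R: "R \<in> RR - {R0}" for R
  proof (rule ccontr)
    assume "route_vec R e \<noteq> 0"
    then have "w \<in> set R" using route_vec_nz[OF _ w] by auto
    then show False using disj R R0(1) w0 by blast
  qed
  have "(\<Sum>R\<in>RR. route_vec R e) = route_vec R0 e + (\<Sum>R\<in>RR - {R0}. route_vec R e)"
    using fin R0(1) by (rule sum.remove)
  also have "(\<Sum>R\<in>RR - {R0}. route_vec R e) = 0" using z by simp
  also have "route_vec R0 e = x e"
  proof -
    have "R0 \<in> routes_of x" using sub R0(1) by blast
    moreover have "e \<inter> Some ` set R0 \<noteq> {}" using w w0 by blast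
    ultimately show ?thesis using routes_ofD[of R0 x e] e by simp
  qed
  finally show ?thesis by simp
qed

lemma degree_count:
  fixes S :: "'v set"
  shows "sum x (cutS S) + 2 * sum x (inner_edges S) \<le> 2 * real (card S)"
proof -
  have finE: "finite (edges :: 'v option set set)" by (rule finite_edges)
  have finS: "finite S" by simp
  let ?c = "\<lambda>e. card {v\<in>S. Some v \<in> e}"
  have "2 * real (card S) = (\<Sum>v\<in>S. sum x (delta_cust v))" using deg by simp
  also have "\<dots> = (\<Sum>v\<in>S. \<Sum>e\<in>edges. if Some v \<in> e then x e else 0)"
    unfolding delta_cust_def using finE by (simp add: sum.inter_filter)
  also have "\<dots> = (\<Sum>e\<in>edges. \<Sum>v\<in>S. if Some v \<in> e then x e else 0)" by (rule sum.swap)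
  also have "\<dots> = (\<Sum>e\<in>edges. x e * real (?c e))"
  proof (rule sum.cong[OF refl])
    fix e
    have "(\<Sum>v\<in>S. if Some v \<in> e then x e else 0) = (\<Sum>v\<in>{v\<in>S. Some v \<in> e}. x e)"
      by (rule sum.inter_filter[symmetric]) (rule finS)
    then show "(\<Sum>v\<in>S. if Some v \<in> e then x e else 0) = x e * real (?c e)" by simp
  qed
  finally have tot: "2 * real (card S) = (\<Sum>e\<in>edges. x e * real (?c e))" .
  have cI: "?c e = card (e \<inter> Some ` S)" for e
  proof -
    have "e \<inter> Some ` S = Some ` {v\<in>S. Some v \<in> e}" by auto
    then show ?thesis by (simp add: card_image)
  qed
  have cin: "?c e = 2" if "e \<in> inner_edges S" for e
  proof -
    from that have e: "e \<in> edges" "e \<subseteq> Some ` S" unfolding inner_edges_def by auto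
    then have "e \<inter> Some ` S = e" by auto
    moreover obtain a b where "a \<noteq> b" "e = {a, b}" using e(1) by (rule edgesE)
    ultimately show ?thesis using cI[of e] by simp
  qed
  have ccut: "?c e = 1" if "e \<in> cutS S" for e using that cI[of e] unfolding cutS_def by simp
  have dj: "cutS S \<inter> inner_edges S = {}" using cin ccut by fastforce
  have subU: "cutS S \<union> inner_edges S \<subseteq> edges" unfolding cutS_def inner_edges_def by auto
  have "(\<Sum>e\<in>cutS S \<union> inner_edges S. x e * real (?c e)) \<le> (\<Sum>e\<in>edges. x e * real (?c e))"
  proof (rule sum_mono2[OF finE subU])
    fix e assume "e \<in> edges - (cutS S \<union> inner_edges S)"
    then show "0 \<le> x e * real (?c e)" using x_nonneg by simp
  qed
  moreover have "(\<Sum>e\<in>cutS S \<union> inner_edges S. x e * real (?c e))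
      = (\<Sum>e\<in>cutS S. x e * real (?c e)) + (\<Sum>e\<in>inner_edges S. x e * real (?c e))"
    by (rule sum.union_disjoint) (use finE subU dj finite_subset in auto)
  moreover have "(\<Sum>e\<in>cutS S. x e * real (?c e)) = sum x (cutS S)" using ccut by simp
  moreover have "(\<Sum>e\<in>inner_edges S. x e * real (?c e)) = 2 * sum x (inner_edges S)"
    using cin by (simp add: sum_distrib_left mult.commute)
  ultimately show ?thesis using tot by simp
qed

end



context plan begin

lemma Pi_in_SRI:
  fixes C :: real and d :: "'s::finite \<Rightarrow> 'v \<Rightarrow> real" and y :: "real^'v^'s"
  assumes C: "0 < C" and yP: "y \<in> Pi_plan C d x" and yB: "y \<in> box0 b"
  shows "y \<in> SRI C d b x"
proof -
  obtain RR where fin: "finite RR" and sub: "RR \<subseteq> routes_of x"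
    and disj: "\<forall>R1\<in>RR. \<forall>R2\<in>RR. R1 \<noteq> R2 \<longrightarrow> set R1 \<inter> set R2 = {}"
    and cov: "\<forall>v. \<exists>R\<in>RR. v \<in> set R"
    using exists_RR by blast
  have yY: "\<And>R xi. R \<in> routes_of x \<Longrightarrow> y $ xi \<in> Yxi C d xi R"
    using yP unfolding Pi_plan_def Pi_route_def by blast
  have ineq: "real_of_int (kxi C d xi S) + sum x (inner_edges S) - real (card S) \<le> (\<Sum>v\<in>S. y $ xi $ v)"
    if Sne: "S \<noteq> {}" for S xi
  proof -
    have yint: "y $ xi $ v \<in> \<int>" for v
    proof -
      obtain R where "R \<in> RR" "v \<in> set R" using cov by blast
      then have "y $ xi \<in> Yxi C d xi R" using yY sub by blast
      then show ?thesis unfolding Yxi_def by blast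
    qed
    let ?D = "\<lambda>R. \<Sum>w\<in>S \<inter> set R. d xi w"
    let ?Y = "\<lambda>R. \<Sum>w\<in>S \<inter> set R. y $ xi $ w"
    let ?c = "\<lambda>R. \<Sum>e\<in>cutS S. route_vec R e"
    have fb: "2 * ?D R \<le> 2 * C * ?Y R + C * ?c R" if R: "R \<in> RR" for R
    proof -
      have Rr: "R \<in> routes_of x" using R sub by blast
      have isr: "is_route R" by (rule routes_of_route[OF Rr])
      show ?thesis using flow_bound[OF isr yY[OF Rr], where S=S] route_cut_count[OF isr, where S=S] by simp
    qed
    have "(\<Sum>R\<in>RR. 2 * ?D R) \<le> (\<Sum>R\<in>RR. 2 * C * ?Y R + C * ?c R)"
      by (rule sum_mono) (rule fb)
    then have s1: "2 * (\<Sum>R\<in>RR. ?D R) \<le> 2 * C * (\<Sum>R\<in>RR. ?Y R) + C * (\<Sum>R\<in>RR. ?c R)"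
      by (simp add: sum.distrib sum_distrib_left)
    have Sunion: "S = (\<Union>R\<in>RR. S \<inter> set R)" using cov by blast
    have dj: "\<forall>R1\<in>RR. \<forall>R2\<in>RR. R1 \<noteq> R2 \<longrightarrow> (S \<inter> set R1) \<inter> (S \<inter> set R2) = {}" using disj by blast
    have sD: "(\<Sum>R\<in>RR. ?D R) = (\<Sum>w\<in>S. d xi w)"
      by (subst Sunion, rule sum.UNION_disjoint[symmetric]) (use fin dj in auto)
    have sY: "(\<Sum>R\<in>RR. ?Y R) = (\<Sum>w\<in>S. y $ xi $ w)"
      by (subst Sunion, rule sum.UNION_disjoint[symmetric]) (use fin dj in auto)
    have sc: "(\<Sum>R\<in>RR. ?c R) \<le> sum x (cutS S)"
    proof -
      have "(\<Sum>R\<in>RR. ?c R) = (\<Sum>e\<in>cutS S. \<Sum>R\<in>RR. route_vec R e)" by (rule sum.swap)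
      also have "\<dots> \<le> (\<Sum>e\<in>cutS S. x e)"
      proof (rule sum_mono)
        fix e assume "e \<in> cutS S"
        then have "e \<in> edges" unfolding cutS_def by simp
        then show "(\<Sum>R\<in>RR. route_vec R e) \<le> x e" by (rule sum_RR_le[OF fin sub disj])
      qed
      finally show ?thesis .
    qed
    have dc: "sum x (cutS S) + 2 * sum x (inner_edges S) \<le> 2 * real (card S)" by (rule degree_count)
    let ?N = "(\<Sum>w\<in>S. y $ xi $ w) + real (card S) - sum x (inner_edges S)"
    have "C * (\<Sum>R\<in>RR. ?c R) \<le> C * (2 * real (card S) - 2 * sum x (inner_edges S))"
      using sc dc C by (intro mult_left_mono) auto
    moreover have s1': "2 * (\<Sum>w\<in>S. d xi w) \<le> 2 * C * (\<Sum>w\<in>S. y $ xi $ w) + C * (\<Sum>R\<in>RR. ?c R)"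
      using s1 unfolding sD sY .
    ultimately have "2 * (\<Sum>w\<in>S. d xi w) \<le> 2 * C * (\<Sum>w\<in>S. y $ xi $ w) + C * (2 * real (card S) - 2 * sum x (inner_edges S))"
      by linarith
    then have "(\<Sum>w\<in>S. d xi w) \<le> C * ?N" by (simp add: algebra_simps)
    then have DN: "(\<Sum>w\<in>S. d xi w) / C \<le> ?N" using C by (simp add: divide_le_eq mult.commute)
    have Nint: "?N \<in> \<int>"
    proof -
      have "(\<Sum>w\<in>S. y $ xi $ w) \<in> \<int>" using yint by (intro Ints_sum) auto
      moreover have "sum x (inner_edges S) \<in> \<int>" using xint unfolding inner_edges_def by (intro Ints_sum) auto
      ultimately show ?thesis by (intro Ints_diff Ints_add) auto
    qed
    then obtain n where n: "?N = of_int n" by (rule Ints_cases)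
    have "kxi C d xi S \<le> n" unfolding kxi_def using DN n by (simp add: ceiling_le_iff)
    then have "real_of_int (kxi C d xi S) \<le> ?N" using n by simp
    then show ?thesis by simp
  qed
  show ?thesis unfolding SRI_def using yB ineq by auto
qed

end



definition Tset :: "real \<Rightarrow> ('s \<Rightarrow> 'v \<Rightarrow> real) \<Rightarrow> ('v \<Rightarrow> int) \<Rightarrow> ('v option set \<Rightarrow> real)
    \<Rightarrow> (real^'v^'s) set" where
  "Tset C d b x = {y. (\<forall>xi v. 0 \<le> y $ xi $ v \<and> y $ xi $ v \<le> real_of_int (b v)) \<and>
     (\<forall>R xi a c. R \<in> routes_of x \<and> a < c \<and> c \<le> length R \<longrightarrow>
        real_of_int (kxi C d xi (seg R a c)) - 1 \<le> (\<Sum>w\<in>seg R a c. y $ xi $ w))}"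

lemma closed_imp_le:
  fixes f :: "'a::topological_space \<Rightarrow> real"
  assumes "continuous_on UNIV f"
  shows "closed {y. P \<longrightarrow> c \<le> f y}"
  using assms by (cases P) (simp_all add: closed_Collect_le)

lemma closed_Tset: "closed (Tset C d b x :: (real^'v^'s) set)"
proof -
  have c1: "closed {y :: real^'v^'s. \<forall>xi v. 0 \<le> y $ xi $ v \<and> y $ xi $ v \<le> real_of_int (b v)}"
    by (intro closed_Collect_all closed_Collect_conj closed_Collect_le continuous_intros)
  have c2: "closed {y :: real^'v^'s. \<forall>R xi a c. R \<in> routes_of x \<and> a < c \<and> c \<le> length R \<longrightarrow>
        real_of_int (kxi C d xi (seg R a c)) - 1 \<le> (\<Sum>w\<in>seg R a c. y $ xi $ w)}"
    by (intro closed_Collect_all closed_imp_le continuous_intros)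
  have "Tset C d b x = {y :: real^'v^'s. \<forall>xi v. 0 \<le> y $ xi $ v \<and> y $ xi $ v \<le> real_of_int (b v)} \<inter>
      {y. \<forall>R xi a c. R \<in> routes_of x \<and> a < c \<and> c \<le> length R \<longrightarrow>
        real_of_int (kxi C d xi (seg R a c)) - 1 \<le> (\<Sum>w\<in>seg R a c. y $ xi $ w)}"
    unfolding Tset_def by blast
  then show ?thesis using c1 c2 by (simp add: closed_Int)
qed

lemma bounded_Tset: "bounded (Tset C d b (x :: 'v::finite option set \<Rightarrow> real) :: (real^'v^'s::finite) set)"
proof -
  let ?B = "\<Sum>xi\<in>(UNIV :: 's set). \<Sum>w\<in>(UNIV :: 'v set). \<bar>real_of_int (b w)\<bar>"
  have "norm y \<le> ?B" if y: "y \<in> Tset C d b x" for y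
  proof -
    have yb: "\<bar>y $ xi $ w\<bar> \<le> \<bar>real_of_int (b w)\<bar>" for xi w
    proof -
      have "0 \<le> y $ xi $ w" "y $ xi $ w \<le> real_of_int (b w)" using y unfolding Tset_def by blast+
      then show ?thesis using abs_of_nonneg[of "y $ xi $ w"] abs_ge_self[of "real_of_int (b w)"] by linarith
    qed
    have "norm y \<le> (\<Sum>xi\<in>UNIV. norm (y $ xi))" unfolding norm_vec_def by (rule L2_set_le_sum) simp
    also have "\<dots> \<le> (\<Sum>xi\<in>UNIV. \<Sum>w\<in>UNIV. \<bar>y $ xi $ w\<bar>)"
      by (rule sum_mono) (rule norm_le_l1_cart)
    also have "\<dots> \<le> ?B" by (intro sum_mono yb)
    finally show ?thesis .
  qed
  then show ?thesis unfolding bounded_iff by blast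
qed

lemma convex_Tset: "convex (Tset C d b x :: (real^'v^'s) set)"
proof (rule convexI)
  fix u v :: "real^'v^'s" and a c :: real
  assume u: "u \<in> Tset C d b x" and v: "v \<in> Tset C d b x" and a: "0 \<le> a" and c: "0 \<le> c" and ac: "a + c = 1"
  have comp: "(a *\<^sub>R u + c *\<^sub>R v) $ xi $ w = a * u $ xi $ w + c * v $ xi $ w" for xi w by simp
  have box: "0 \<le> (a *\<^sub>R u + c *\<^sub>R v) $ xi $ w \<and> (a *\<^sub>R u + c *\<^sub>R v) $ xi $ w \<le> real_of_int (b w)" for xi w
  proof -
    have "0 \<le> u $ xi $ w" "u $ xi $ w \<le> real_of_int (b w)" "0 \<le> v $ xi $ w" "v $ xi $ w \<le> real_of_int (b w)"
      using u v unfolding Tset_def by auto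
    moreover have "a * u $ xi $ w + c * v $ xi $ w \<le> a * real_of_int (b w) + c * real_of_int (b w)"
      using calculation a c by (intro add_mono mult_left_mono) auto
    moreover have "a * real_of_int (b w) + c * real_of_int (b w) = real_of_int (b w)"
      using ac by (metis distrib_right mult_1)
    moreover have "0 \<le> a * u $ xi $ w + c * v $ xi $ w"
      using calculation(1,3) a c by (intro add_nonneg_nonneg mult_nonneg_nonneg) auto
    ultimately show ?thesis unfolding comp by linarith
  qed
  have seg: "real_of_int (kxi C d xi (seg R s t)) - 1 \<le> (\<Sum>w\<in>seg R s t. (a *\<^sub>R u + c *\<^sub>R v) $ xi $ w)"
    if "R \<in> routes_of x \<and> s < t \<and> t \<le> length R" for R xi s t
  proof -
    let ?k = "real_of_int (kxi C d xi (seg R s t)) - 1"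
    have "?k \<le> (\<Sum>w\<in>seg R s t. u $ xi $ w)" "?k \<le> (\<Sum>w\<in>seg R s t. v $ xi $ w)"
      using u v that unfolding Tset_def by auto
    then have "a * ?k + c * ?k \<le> a * (\<Sum>w\<in>seg R s t. u $ xi $ w) + c * (\<Sum>w\<in>seg R s t. v $ xi $ w)"
      using a c by (intro add_mono mult_left_mono) auto
    moreover have "(\<Sum>w\<in>seg R s t. (a *\<^sub>R u + c *\<^sub>R v) $ xi $ w)
        = a * (\<Sum>w\<in>seg R s t. u $ xi $ w) + c * (\<Sum>w\<in>seg R s t. v $ xi $ w)"
      unfolding comp by (simp add: sum.distrib sum_distrib_left)
    moreover have "a * ?k + c * ?k = ?k" using ac by (metis distrib_right mult_1)
    ultimately show ?thesis by linarith
  qed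
  show "a *\<^sub>R u + c *\<^sub>R v \<in> Tset C d b x" unfolding Tset_def using box seg by blast
qed

lemma convex_SRI: "convex (SRI C d b x :: (real^'v^'s) set)"
proof (rule convexI)
  fix u v :: "real^'v^'s" and a c :: real
  assume u: "u \<in> SRI C d b x" and v: "v \<in> SRI C d b x" and a: "0 \<le> a" and c: "0 \<le> c" and ac: "a + c = 1"
  have comp: "(a *\<^sub>R u + c *\<^sub>R v) $ xi $ w = a * u $ xi $ w + c * v $ xi $ w" for xi w by simp
  have box: "0 \<le> (a *\<^sub>R u + c *\<^sub>R v) $ xi $ w \<and> (a *\<^sub>R u + c *\<^sub>R v) $ xi $ w \<le> real_of_int (b w)" for xi w
  proof -
    have "0 \<le> u $ xi $ w" "u $ xi $ w \<le> real_of_int (b w)" "0 \<le> v $ xi $ w" "v $ xi $ w \<le> real_of_int (b w)"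
      using u v unfolding SRI_def box0_def by auto
    moreover have "a * u $ xi $ w + c * v $ xi $ w \<le> a * real_of_int (b w) + c * real_of_int (b w)"
      using calculation a c by (intro add_mono mult_left_mono) auto
    moreover have "a * real_of_int (b w) + c * real_of_int (b w) = real_of_int (b w)"
      using ac by (metis distrib_right mult_1)
    moreover have "0 \<le> a * u $ xi $ w + c * v $ xi $ w"
      using calculation(1,3) a c by (intro add_nonneg_nonneg mult_nonneg_nonneg) auto
    ultimately show ?thesis unfolding comp by linarith
  qed
  have ineq: "real_of_int (kxi C d xi S) + sum x (inner_edges S) - real (card S) \<le> (\<Sum>w\<in>S. (a *\<^sub>R u + c *\<^sub>R v) $ xi $ w)"
    if "S \<noteq> {}" for S xi
  proof -
    let ?k = "real_of_int (kxi C d xi S) + sum x (inner_edges S) - real (card S)"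
    have "?k \<le> (\<Sum>w\<in>S. u $ xi $ w)" "?k \<le> (\<Sum>w\<in>S. v $ xi $ w)"
      using u v that unfolding SRI_def by auto
    then have "a * ?k + c * ?k \<le> a * (\<Sum>w\<in>S. u $ xi $ w) + c * (\<Sum>w\<in>S. v $ xi $ w)"
      using a c by (intro add_mono mult_left_mono) auto
    moreover have "(\<Sum>w\<in>S. (a *\<^sub>R u + c *\<^sub>R v) $ xi $ w)
        = a * (\<Sum>w\<in>S. u $ xi $ w) + c * (\<Sum>w\<in>S. v $ xi $ w)"
      unfolding comp by (simp add: sum.distrib sum_distrib_left)
    moreover have "a * ?k + c * ?k = ?k" using ac by (metis distrib_right mult_1)
    ultimately show ?thesis by linarith
  qed
  show "a *\<^sub>R u + c *\<^sub>R v \<in> SRI C d b x" unfolding SRI_def box0_def using box ineq by auto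
qed

context plan begin

lemma seg_inner:
  assumes R: "R \<in> routes_of x" and ac: "a < c" "c \<le> length R"
  shows "real (c - a) - 1 \<le> sum x (inner_edges (seg R a c))"
proof -
  have isr: "is_route R" by (rule routes_of_route[OF R])
  have dR: "distinct R" using isr unfolding is_route_def by simp
  let ?l = "length R"
  let ?g = "\<lambda>k. {Some (R ! k), Some (R ! Suc k)}"
  let ?K = "{a..<c - 1}"
  have ne: "\<And>p q. p < ?l \<Longrightarrow> q < ?l \<Longrightarrow> R ! p = R ! q \<longleftrightarrow> p = q"
    using nth_eq_iff_index_eq[OF dR] by blast
  have inj: "inj_on ?g ?K"
  proof (rule inj_onI)
    fix p q assume p: "p \<in> ?K" and q: "q \<in> ?K" and eq: "?g p = ?g q"
    have pl: "Suc p < ?l" "Suc q < ?l" using p q ac by auto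
    from eq have "(R ! p = R ! q \<and> R ! Suc p = R ! Suc q) \<or> (R ! p = R ! Suc q \<and> R ! Suc p = R ! q)"
      by (simp add: doubleton_eq_iff)
    then show "p = q"
    proof
      assume "R ! p = R ! q \<and> R ! Suc p = R ! Suc q"
      then show "p = q" using ne[of p q] pl by simp
    next
      assume h: "R ! p = R ! Suc q \<and> R ! Suc p = R ! q"
      then have "p = Suc q" using ne[of p "Suc q"] pl by simp
      moreover have "Suc p = q" using h ne[of "Suc p" q] pl by simp
      ultimately show "p = q" by simp
    qed
  qed
  have sub: "?g ` ?K \<subseteq> inner_edges (seg R a c)"
  proof
    fix e assume "e \<in> ?g ` ?K"
    then obtain k where k: "k \<in> ?K" "e = ?g k" by auto
    have kl: "Suc k < ?l" using k ac by auto
    have "R ! k \<noteq> R ! Suc k" using ne[of k "Suc k"] kl by simp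
    moreover have "R ! k \<in> seg R a c" "R ! Suc k \<in> seg R a c" using k ac unfolding seg_def by auto
    ultimately show "e \<in> inner_edges (seg R a c)" using k unfolding inner_edges_def by auto
  qed
  have x1: "x (?g k) = 1" if k: "k \<in> ?K" for k
  proof -
    have kl: "Suc k < ?l" using k ac by auto
    let ?w = "Some (R ! Suc k)"
    have w: "?w = route_vtx R (Suc (Suc k))" using rv_Suc[of "Suc k" R] kl by simp
    have wS: "?w \<noteq> Some (R ! k)" using ne[of "Suc k" k] kl by simp
    have "route_vtx R k \<noteq> route_vtx R (Suc (Suc k))"
      using rv_eq_iff[OF dR, of k "Suc (Suc k)"] kl by auto
    then show ?thesis using route_x[OF R _ wS] kl w by simp
  qed
  have finI: "finite (inner_edges (seg R a c))"
    unfolding inner_edges_def by (rule finite_subset[OF _ finite_edges]) auto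
  have "real (c - a) - 1 = real (card ?K)" using ac by simp
  also have "\<dots> = (\<Sum>e\<in>?g ` ?K. x e)"
    using sum.reindex[OF inj, of x] x1 by simp
  also have "\<dots> \<le> sum x (inner_edges (seg R a c))"
  proof (rule sum_mono2[OF finI sub])
    fix e assume "e \<in> inner_edges (seg R a c) - ?g ` ?K"
    then have "e \<in> edges" unfolding inner_edges_def by simp
    then show "0 \<le> x e" by (rule x_nonneg)
  qed
  finally show ?thesis .
qed

lemma SRI_sub_T: "SRI C d b x \<subseteq> Tset C d b x"
proof
  fix y assume y: "y \<in> SRI C d b x"
  have box: "\<forall>xi v. 0 \<le> y $ xi $ v \<and> y $ xi $ v \<le> real_of_int (b v)"
    using y unfolding SRI_def box0_def by auto
  have "real_of_int (kxi C d xi (seg R a c)) - 1 \<le> (\<Sum>w\<in>seg R a c. y $ xi $ w)"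
    if h: "R \<in> routes_of x \<and> a < c \<and> c \<le> length R" for R xi a c
  proof -
    have isr: "is_route R" using h routes_of_route by blast
    have dR: "distinct R" using isr unfolding is_route_def by simp
    have ne: "seg R a c \<noteq> {}" using h unfolding seg_def by auto
    have "real_of_int (kxi C d xi (seg R a c)) + sum x (inner_edges (seg R a c)) - real (card (seg R a c))
        \<le> (\<Sum>w\<in>seg R a c. y $ xi $ w)" using y ne unfolding SRI_def by auto
    moreover have "card (seg R a c) = c - a" using card_seg[OF dR] h by simp
    moreover have "real (c - a) - 1 \<le> sum x (inner_edges (seg R a c))" using seg_inner h by blast
    ultimately show ?thesis by simp
  qed
  then show "y \<in> Tset C d b x" unfolding Tset_def using box by blast
qed

lemma int_T_in_Pi:
  assumes C: "0 < C" and dnn: "\<forall>xi w. 0 \<le> d xi w"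
    and y: "y \<in> Tset C d b x" and yint: "\<forall>xi v. y $ xi $ v \<in> \<int>"
  shows "y \<in> Pi_plan C d x \<inter> box0 b"
proof -
  have box: "\<forall>xi v. 0 \<le> y $ xi $ v \<and> y $ xi $ v \<le> real_of_int (b v)"
    using y unfolding Tset_def by blast
  have "y $ xi \<in> Yxi C d xi R" if R: "R \<in> routes_of x" for R xi
  proof (rule greedy)
    show "is_route R" by (rule routes_of_route[OF R])
    show "0 < C" by (rule C)
    show "\<forall>w. 0 \<le> d xi w" using dnn by blast
    show "\<forall>w. y $ xi $ w \<in> \<int> \<and> 0 \<le> y $ xi $ w" using yint box by blast
    show "\<forall>a c. a < c \<longrightarrow> c \<le> length R \<longrightarrow>
         real_of_int (kxi C d xi (seg R a c)) - 1 \<le> (\<Sum>w\<in>seg R a c. y $ xi $ w)"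
      using y R unfolding Tset_def by blast
  qed
  then show ?thesis unfolding Pi_plan_def Pi_route_def box0_def using box by blast
qed

end



lemma seg_rev:
  assumes "c \<le> length R" "a \<le> c"
  shows "seg (rev R) a c = seg R (length R - c) (length R - a)"
proof (rule set_eqI, rule iffI)
  fix w assume "w \<in> seg (rev R) a c"
  then obtain k where k: "a \<le> k" "k < c" "w = rev R ! k" unfolding seg_def by auto
  then have "w = R ! (length R - Suc k)" using assms by (simp add: rev_nth)
  moreover have "length R - Suc k \<in> {length R - c..<length R - a}" using k assms by auto
  ultimately show "w \<in> seg R (length R - c) (length R - a)" unfolding seg_def by blast
next
  fix w assume "w \<in> seg R (length R - c) (length R - a)"
  then obtain j where j: "length R - c \<le> j" "j < length R - a" "w = R ! j" unfolding seg_def by auto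
  let ?k = "length R - Suc j"
  have k: "a \<le> ?k" "?k < c" using j assms by auto
  have "rev R ! ?k = R ! j" using j assms by (simp add: rev_nth)
  then show "w \<in> seg (rev R) a c" unfolding seg_def using k j by (intro image_eqI[of _ _ ?k]) auto
qed

lemma frac_eq_of_diff: "(p::real) - q \<in> \<int> \<Longrightarrow> frac p = frac q"
proof -
  assume h: "p - q \<in> \<int>"
  have e: "p - frac q = (p - q) + of_int \<lfloor>q\<rfloor>" unfolding frac_def by simp
  have i: "(p - q) + of_int \<lfloor>q\<rfloor> \<in> \<int>" using h by (intro Ints_add) auto
  have "p - frac q \<in> \<int>" using i unfolding e[symmetric] .
  then show ?thesis using frac_unique_iff[of p "frac q"] frac_lt_1[of q] frac_ge_0[of q] by simp
qed

context plan begin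

lemma extreme_int:
  fixes C :: real and d :: "'s::finite \<Rightarrow> 'v \<Rightarrow> real" and y :: "real^'v^'s"
  assumes ext: "y extreme_point_of (Tset C d b x)"
  shows "y $ xi0 $ v0 \<in> \<int>"
proof (rule ccontr)
  assume nint: "y $ xi0 $ v0 \<notin> \<int>"
  have yT: "y \<in> Tset C d b x" using ext unfolding extreme_point_of_def by blast
  have ybox: "\<And>xi v. 0 \<le> y $ xi $ v \<and> y $ xi $ v \<le> real_of_int (b v)"
    using yT unfolding Tset_def by blast
  have ycons: "\<And>R xi a c. R \<in> routes_of x \<Longrightarrow> a < c \<Longrightarrow> c \<le> length R \<Longrightarrow>
        real_of_int (kxi C d xi (seg R a c)) - 1 \<le> (\<Sum>w\<in>seg R a c. y $ xi $ w)"
    using yT unfolding Tset_def by blast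
  obtain R0 where R0: "R0 \<in> routes_of x" "v0 \<in> set R0" using cover by blast
  have isr: "is_route R0" by (rule routes_of_route[OF R0(1)])
  have dR: "distinct R0" using isr unfolding is_route_def by simp
  let ?l = "length R0"
  obtain m where m: "m < ?l" "R0 ! m = v0" using R0(2) by (auto simp: in_set_conv_nth)
  define P where "P i = (\<Sum>k = 0..<i. y $ xi0 $ (R0 ! k))" for i
  have Pdiff: "P c - P a = (\<Sum>w\<in>seg R0 a c. y $ xi0 $ w)" if "a \<le> c" "c \<le> ?l" for a c
  proof -
    have "(\<Sum>k = 0..<a. y $ xi0 $ (R0 ! k)) + (\<Sum>k = a..<c. y $ xi0 $ (R0 ! k)) = (\<Sum>k = 0..<c. y $ xi0 $ (R0 ! k))"
      by (rule sum.atLeastLessThan_concat) (use that in auto)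
    then have "P c = P a + (\<Sum>k = a..<c. y $ xi0 $ (R0 ! k))"
      unfolding P_def by simp
    then show ?thesis using sum_seg[OF dR that(2), of "\<lambda>w. y $ xi0 $ w" a] by simp
  qed
  have PS: "P (Suc k) - P k = y $ xi0 $ (R0 ! k)" for k unfolding P_def by simp
  obtain j where j: "j \<le> ?l" "P j \<notin> \<int>"
  proof (cases "P m \<in> \<int>")
    case True
    have "P (Suc m) \<notin> \<int>"
    proof
      assume "P (Suc m) \<in> \<int>"
      then have "P (Suc m) - P m \<in> \<int>" using True by simp
      then show False using PS[of m] m nint by simp
    qed
    moreover have "Suc m \<le> ?l" using m by simp
    ultimately show ?thesis using that by blast
  next
    case False
    moreover have "m \<le> ?l" using m by simp
    ultimately show ?thesis using that by blast
  qed
  define phi where "phi = frac (P j)"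
  have phi: "0 < phi" using j(2) unfolding phi_def using frac_ge_0[of "P j"] frac_eq_0_iff[of "P j"] by linarith
  define Z where "Z i = (if frac (P i) = phi then 1 else 0 :: real)" for i
  have ZP: "Z c = Z a" if "P c - P a \<in> \<int>" for a c
    using frac_eq_of_diff[OF that] unfolding Z_def by simp
  have Z0: "Z 0 = 0" using phi unfolding Z_def P_def by simp
  have Zj: "Z j = 1" unfolding Z_def phi_def by simp
  have Zb: "\<bar>Z c - Z a\<bar> \<le> 1" for a c unfolding Z_def by simp
  define zz :: "real^'v^'s" where
    "zz = (\<chi> xi w. if xi = xi0 \<and> w \<in> set R0 then Z (Suc (pos R0 w)) - Z (pos R0 w) else 0)"
  have zz_at: "zz $ xi0 $ (R0 ! k) = Z (Suc k) - Z k" if "k < ?l" for k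
    unfolding zz_def using pos_nth[OF dR that] that by simp
  have zz_off: "zz $ xi $ w = 0" if "xi \<noteq> xi0 \<or> w \<notin> set R0" for xi w
    unfolding zz_def using that by auto
  have zz_bd: "\<bar>zz $ xi $ w\<bar> \<le> 1" for xi w
    unfolding zz_def using Zb by simp
  have zz_seg: "(\<Sum>w\<in>seg R0 a c. zz $ xi0 $ w) = Z c - Z a" if "a \<le> c" "c \<le> ?l" for a c
  proof -
    have "(\<Sum>w\<in>seg R0 a c. zz $ xi0 $ w) = (\<Sum>k = a..<c. zz $ xi0 $ (R0 ! k))"
      by (rule sum_seg[OF dR that(2)])
    also have "\<dots> = (\<Sum>k = a..<c. Z (Suc k) - Z k)"
      by (rule sum.cong) (use zz_at that in auto)
    also have "\<dots> = Z c - Z a" by (rule sum_Suc_diff'[OF that(1)])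
    finally show ?thesis .
  qed
  have zz_nonint: "y $ xi $ w \<notin> \<int>" if "zz $ xi $ w \<noteq> 0" for xi w
  proof -
    have h: "xi = xi0" "w \<in> set R0" using zz_off that by blast+
    then obtain k where k: "k < ?l" "R0 ! k = w" by (auto simp: in_set_conv_nth)
    have "Z (Suc k) \<noteq> Z k" using zz_at[OF k(1)] that h k by simp
    then have "P (Suc k) - P k \<notin> \<int>" using ZP by blast
    then show ?thesis using PS[of k] h k by simp
  qed
  have zz_ne: "zz \<noteq> 0"
  proof
    assume z0: "zz = 0"
    have "(\<Sum>k = 0..<j. Z (Suc k) - Z k) = Z j - Z 0" by (rule sum_Suc_diff') simp
    then have "(\<Sum>k = 0..<j. Z (Suc k) - Z k) \<noteq> 0" using Z0 Zj by simp
    then obtain k where k: "k < j" "Z (Suc k) - Z k \<noteq> 0" by (meson atLeastLessThan_iff sum.neutral)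
    then have "zz $ xi0 $ (R0 ! k) \<noteq> 0" using zz_at[of k] j by simp
    then show False using z0 by simp
  qed
  define SL1 where "SL1 = (\<lambda>(a, c). (\<Sum>w\<in>seg R0 a c. y $ xi0 $ w) - (real_of_int (kxi C d xi0 (seg R0 a c)) - 1))
        ` {(a, c). a < c \<and> c \<le> ?l}"
  define SL2 where "SL2 = (\<lambda>w. y $ xi0 $ w) ` UNIV"
  define SL3 where "SL3 = (\<lambda>w. real_of_int (b w) - y $ xi0 $ w) ` UNIV"
  define Pos where "Pos = {s \<in> SL1 \<union> SL2 \<union> SL3. 0 < s}"
  define eps where "eps = Min (insert 1 Pos)"
  have finPos: "finite Pos"
  proof -
    have "{(a, c). a < c \<and> c \<le> ?l} \<subseteq> {..?l} \<times> {..?l}" by auto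
    then have "finite {(a, c). a < c \<and> c \<le> ?l}" using finite_subset by blast
    then have "finite SL1" unfolding SL1_def by simp
    moreover have "finite SL2" "finite SL3" unfolding SL2_def SL3_def by simp_all
    ultimately show ?thesis unfolding Pos_def by simp
  qed
  have eps_pos: "0 < eps" unfolding eps_def using finPos by (simp add: Min_gr_iff Pos_def)
  have eps_le: "eps \<le> s" if "s \<in> Pos" for s unfolding eps_def using finPos that by simp
  have comp: "(y + t *\<^sub>R zz) $ xi $ w = y $ xi $ w + t * zz $ xi $ w" for t xi w by simp
  have tz: "\<bar>t * zz $ xi $ w\<bar> \<le> eps" if t: "\<bar>t\<bar> \<le> eps" for t xi w
  proof -
    have "\<bar>t * zz $ xi $ w\<bar> = \<bar>t\<bar> * \<bar>zz $ xi $ w\<bar>" by (simp add: abs_mult)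
    also have "\<dots> \<le> \<bar>t\<bar> * 1" using zz_bd by (intro mult_left_mono) auto
    finally show ?thesis using t by simp
  qed
  have inT: "y + t *\<^sub>R zz \<in> Tset C d b x" if t: "\<bar>t\<bar> \<le> eps" for t
  proof -
    have box: "0 \<le> (y + t *\<^sub>R zz) $ xi $ w \<and> (y + t *\<^sub>R zz) $ xi $ w \<le> real_of_int (b w)" for xi w
    proof (cases "zz $ xi $ w = 0")
      case True then show ?thesis using ybox[of xi w] by simp
    next
      case False
      have xi: "xi = xi0" using zz_off False by blast
      have ni: "y $ xi $ w \<notin> \<int>" using zz_nonint False by blast
      have "y $ xi $ w \<noteq> 0" using ni by auto
      moreover have "y $ xi $ w \<noteq> real_of_int (b w)" using ni by auto
      ultimately have pos1: "0 < y $ xi0 $ w" and pos2: "0 < real_of_int (b w) - y $ xi0 $ w"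
        using ybox[of xi w] xi by auto
      have "y $ xi0 $ w \<in> Pos" unfolding Pos_def SL2_def using pos1 by auto
      then have e1: "eps \<le> y $ xi0 $ w" by (rule eps_le)
      have "real_of_int (b w) - y $ xi0 $ w \<in> Pos" unfolding Pos_def SL3_def using pos2 by auto
      then have e2: "eps \<le> real_of_int (b w) - y $ xi0 $ w" by (rule eps_le)
      have "\<bar>t * zz $ xi $ w\<bar> \<le> eps" by (rule tz[OF t])
      then show ?thesis unfolding comp using e1 e2 xi by (auto simp: abs_le_iff)
    qed
    have segR0: "real_of_int (kxi C d xi0 (seg R0 a c)) - 1 \<le> (\<Sum>w\<in>seg R0 a c. (y + t *\<^sub>R zz) $ xi0 $ w)"
      if ac: "a < c" "c \<le> ?l" for a c
    proof -
      let ?k = "real_of_int (kxi C d xi0 (seg R0 a c)) - 1"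
      let ?Y = "\<Sum>w\<in>seg R0 a c. y $ xi0 $ w"
      have sum_eq: "(\<Sum>w\<in>seg R0 a c. (y + t *\<^sub>R zz) $ xi0 $ w) = ?Y + t * (Z c - Z a)"
        unfolding comp using zz_seg[of a c] ac by (simp add: sum.distrib sum_distrib_left[symmetric])
      have ge: "?k \<le> ?Y" using ycons[OF R0(1) ac] .
      show ?thesis
      proof (cases "?Y - ?k = 0")
        case True
        then have "P c - P a \<in> \<int>" using Pdiff[of a c] ac by simp
        then have "Z c = Z a" by (rule ZP)
        then show ?thesis using sum_eq ge by simp
      next
        case False
        then have "?Y - ?k \<in> Pos" unfolding Pos_def SL1_def using ge ac by force
        then have "eps \<le> ?Y - ?k" by (rule eps_le)
        moreover have "\<bar>t * (Z c - Z a)\<bar> \<le> eps"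
        proof -
          have "\<bar>t * (Z c - Z a)\<bar> = \<bar>t\<bar> * \<bar>Z c - Z a\<bar>" by (simp add: abs_mult)
          also have "\<dots> \<le> \<bar>t\<bar> * 1" using Zb by (intro mult_left_mono) auto
          finally show ?thesis using t by simp
        qed
        ultimately show ?thesis using sum_eq by (auto simp: abs_le_iff)
      qed
    qed
    have segs: "real_of_int (kxi C d xi (seg R a c)) - 1 \<le> (\<Sum>w\<in>seg R a c. (y + t *\<^sub>R zz) $ xi $ w)"
      if h: "R \<in> routes_of x \<and> a < c \<and> c \<le> length R" for R xi a c
    proof -
      have ge: "real_of_int (kxi C d xi (seg R a c)) - 1 \<le> (\<Sum>w\<in>seg R a c. y $ xi $ w)"
        using ycons h by blast
      have split: "(\<Sum>w\<in>seg R a c. (y + t *\<^sub>R zz) $ xi $ w)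
          = (\<Sum>w\<in>seg R a c. y $ xi $ w) + t * (\<Sum>w\<in>seg R a c. zz $ xi $ w)"
        unfolding comp by (simp add: sum.distrib sum_distrib_left)
      show ?thesis
      proof (cases "xi = xi0 \<and> set R \<inter> set R0 \<noteq> {}")
        case False
        have "seg R a c \<subseteq> set R" using h unfolding seg_def by auto
        then have "\<forall>w\<in>seg R a c. zz $ xi $ w = 0" using False zz_off by blast
        then have "(\<Sum>w\<in>seg R a c. zz $ xi $ w) = 0" by simp
        then show ?thesis using split ge by simp
      next
        case True
        then obtain v where v: "v \<in> set R0" "v \<in> set R" by blast
        have xi: "xi = xi0" using True by simp
        have "R = R0 \<or> R = rev R0" using uniq[OF R0(1) _ v] h by blast
        then show ?thesis
        proof
          assume "R = R0" then show ?thesis using segR0 h xi by simp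
        next
          assume Rr: "R = rev R0"
          then have lR: "length R = ?l" by simp
          have "seg R a c = seg R0 (?l - c) (?l - a)" using seg_rev[of c R0 a] h Rr by simp
          moreover have "?l - c < ?l - a" "?l - a \<le> ?l" using h lR by auto
          ultimately show ?thesis using segR0[of "?l - c" "?l - a"] xi by simp
        qed
      qed
    qed
    show ?thesis unfolding Tset_def using box segs by blast
  qed
  have A: "y - eps *\<^sub>R zz \<in> Tset C d b x" using inT[of "- eps"] eps_pos by simp
  have B: "y + eps *\<^sub>R zz \<in> Tset C d b x" using inT[of eps] eps_pos by simp
  have ne: "y - eps *\<^sub>R zz \<noteq> y + eps *\<^sub>R zz"
  proof
    assume eq: "y - eps *\<^sub>R zz = y + eps *\<^sub>R zz"
    obtain xi where "zz $ xi \<noteq> 0" using zz_ne vec_eq_iff[of zz 0] by auto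
    then obtain w where nz: "zz $ xi $ w \<noteq> 0" using vec_eq_iff[of "zz $ xi" 0] by auto
    have "(y - eps *\<^sub>R zz) $ xi $ w = (y + eps *\<^sub>R zz) $ xi $ w" by (simp only: eq)
    then have "y $ xi $ w - eps * zz $ xi $ w = y $ xi $ w + eps * zz $ xi $ w" by simp
    then show False using eps_pos nz by simp
  qed
  have mid: "midpoint (y - eps *\<^sub>R zz) (y + eps *\<^sub>R zz) = y"
  proof -
    have "(y - eps *\<^sub>R zz) + (y + eps *\<^sub>R zz) = 2 *\<^sub>R y" by (simp add: scaleR_2)
    then show ?thesis unfolding midpoint_def by simp
  qed
  have "y \<in> open_segment (y - eps *\<^sub>R zz) (y + eps *\<^sub>R zz)"
    using midpoint_in_open_segment[of "y - eps *\<^sub>R zz" "y + eps *\<^sub>R zz"] ne mid by simp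
  then show False using ext A B unfolding extreme_point_of_def by blast
qed

end



theorem theorem3:
  fixes C :: real and p :: "'s::finite \<Rightarrow> real" and d :: "'s \<Rightarrow> 'v::finite \<Rightarrow> real"
    and b :: "'v \<Rightarrow> int" and X :: "('v option set \<Rightarrow> real) set"
    and xbar :: "'v option set \<Rightarrow> real"
  assumes C_pos: "C \<in> \<rat>" "0 < C"
    and d_rat: "\<forall>xi v. d xi v \<in> \<rat> \<and> 0 \<le> d xi v \<and> d xi v \<le> C"
    and p_prob: "\<forall>xi. 0 \<le> p xi" "(\<Sum>xi\<in>UNIV. p xi) = 1"
    and X_choice: "X = X_sub \<or> (\<exists>k::nat. 0 < k \<and> X = X_cvrp C p d k)"
    and b_nonneg: "\<forall>v. 0 \<le> b v"
    and x_in: "xbar \<in> X" and x_int: "\<forall>e\<in>edges. xbar e \<in> \<int>"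
  shows "SRI C d b xbar = convex hull (Pi_plan C d xbar \<inter> box0 b)"
proof -
  have xs: "xbar \<in> X_sub" using X_choice x_in unfolding X_cvrp_def by auto
  interpret plan xbar using xs x_int by (unfold_locales)
  have dnn: "\<forall>xi w. 0 \<le> d xi w" using d_rat by blast
  have T_eq: "Tset C d b xbar = convex hull {y. y extreme_point_of (Tset C d b xbar)}"
    by (rule Krein_Milman_Minkowski)
      (simp_all add: compact_eq_bounded_closed bounded_Tset closed_Tset convex_Tset)
  have ext_sub: "{y. y extreme_point_of (Tset C d b xbar)} \<subseteq> Pi_plan C d xbar \<inter> box0 b"
  proof
    fix y assume "y \<in> {y. y extreme_point_of (Tset C d b xbar)}"
    then have ext: "y extreme_point_of (Tset C d b xbar)" by simp
    have yT: "y \<in> Tset C d b xbar" using ext unfolding extreme_point_of_def by blast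
    have "\<forall>xi v. y $ xi $ v \<in> \<int>" using extreme_int[OF ext] by blast
    then show "y \<in> Pi_plan C d xbar \<inter> box0 b" using int_T_in_Pi[OF C_pos(2) dnn yT] by blast
  qed
  have sub1: "SRI C d b xbar \<subseteq> convex hull (Pi_plan C d xbar \<inter> box0 b)"
  proof -
    have "SRI C d b xbar \<subseteq> Tset C d b xbar" by (rule SRI_sub_T)
    also have "\<dots> = convex hull {y. y extreme_point_of (Tset C d b xbar)}" by (rule T_eq)
    also have "\<dots> \<subseteq> convex hull (Pi_plan C d xbar \<inter> box0 b)" by (rule hull_mono[OF ext_sub])
    finally show ?thesis .
  qed
  have sub2: "convex hull (Pi_plan C d xbar \<inter> box0 b) \<subseteq> SRI C d b xbar"
  proof (rule hull_minimal)
    show "Pi_plan C d xbar \<inter> box0 b \<subseteq> SRI C d b xbar"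
      using Pi_in_SRI[OF C_pos(2)] by blast
    show "convex (SRI C d b xbar)" by (rule convex_SRI)
  qed
  show ?thesis using sub1 sub2 by blast
qed



end
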